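(* There exist a $\sigma$-finite measure space $(\Omega,\mathcal{F},\mu)$ and a strongly continuous semigroup $(e^{tD})_{t\ge 0}$ of positive operators on $L_2(\Omega,\mathcal{F},\mu)$, with generator $D$, such that $(1 + i\mathbb{R}) \cap \sigma(D) = \emptyset$ but $e^{2\pi} \in \sigma(e^{2\pi D})$.
   Context: $\sigma(T)$ denotes the spectrum of a (possibly unbounded) operator $T$. A semigroup is positive if each operator $e^{tD}$, $t\ge 0$, maps nonnegative functions to nonnegative functions. $1+i\mathbb{R} = \{1+iy : y \in \mathbb{R}\}$. *)

theory Defs
  imports "HOL-Analysis.Analysis"
begin

text \<open>The complex Hilbert space L2(Omega,F,mu) is represented by square-integrable
  measurable complex functions, identified up to mu-a.e. equality.\<close>

definition L2 :: "'a measure \<Rightarrow> ('a \<Rightarrow> complex) set" where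
  "L2 M = {f. f \<in> borel_measurable M \<and> integrable M (\<lambda>x. (cmod (f x))\<^sup>2)}"

definition Ltwo_norm :: "'a measure \<Rightarrow> ('a \<Rightarrow> complex) \<Rightarrow> real" where
  "Ltwo_norm M f = sqrt (\<integral>x. (cmod (f x))\<^sup>2 \<partial>M)"

definition ae_eq :: "'a measure \<Rightarrow> ('a \<Rightarrow> complex) \<Rightarrow> ('a \<Rightarrow> complex) \<Rightarrow> bool" where
  "ae_eq M f g \<longleftrightarrow> (AE x in M. f x = g x)"

definition bounded_op :: "'a measure \<Rightarrow> (('a \<Rightarrow> complex) \<Rightarrow> ('a \<Rightarrow> complex)) \<Rightarrow> bool" where
  "bounded_op M T \<longleftrightarrow>
     (\<forall>f\<in>L2 M. T f \<in> L2 M) \<and>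
     (\<forall>f\<in>L2 M. \<forall>g\<in>L2 M. ae_eq M f g \<longrightarrow> ae_eq M (T f) (T g)) \<and>
     (\<forall>f\<in>L2 M. \<forall>g\<in>L2 M. \<forall>a b :: complex.
        ae_eq M (T (\<lambda>x. a * f x + b * g x)) (\<lambda>x. a * T f x + b * T g x)) \<and>
     (\<exists>C. \<forall>f\<in>L2 M. Ltwo_norm M (T f) \<le> C * Ltwo_norm M f)"

definition positive_op :: "'a measure \<Rightarrow> (('a \<Rightarrow> complex) \<Rightarrow> ('a \<Rightarrow> complex)) \<Rightarrow> bool" where
  "positive_op M T \<longleftrightarrow>
     (\<forall>f\<in>L2 M. (AE x in M. Im (f x) = 0 \<and> Re (f x) \<ge> 0) \<longrightarrow>
                (AE x in M. Im (T f x) = 0 \<and> Re (T f x) \<ge> 0))"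

definition C0_semigroup :: "'a measure \<Rightarrow> (real \<Rightarrow> ('a \<Rightarrow> complex) \<Rightarrow> ('a \<Rightarrow> complex)) \<Rightarrow> bool" where
  "C0_semigroup M S \<longleftrightarrow>
     (\<forall>t\<ge>0. bounded_op M (S t)) \<and>
     (\<forall>f\<in>L2 M. ae_eq M (S 0 f) f) \<and>
     (\<forall>s\<ge>0. \<forall>t\<ge>0. \<forall>f\<in>L2 M. ae_eq M (S (s + t) f) (S s (S t f))) \<and>
     (\<forall>f\<in>L2 M. ((\<lambda>t. Ltwo_norm M (\<lambda>x. S t f x - f x)) \<longlongrightarrow> 0) (at_right 0))"

text \<open>The generator D of S, as a graph: D f g means f \<in> dom D and D f = g (a.e.), where
  D f = lim_{h \<rightarrow> 0+} (S h f - f)/h in L2.\<close>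

definition generator :: "'a measure \<Rightarrow> (real \<Rightarrow> ('a \<Rightarrow> complex) \<Rightarrow> ('a \<Rightarrow> complex))
    \<Rightarrow> ('a \<Rightarrow> complex) \<Rightarrow> ('a \<Rightarrow> complex) \<Rightarrow> bool" where
  "generator M S f g \<longleftrightarrow> f \<in> L2 M \<and> g \<in> L2 M \<and>
     ((\<lambda>h. Ltwo_norm M (\<lambda>x. (S h f x - f x) / complex_of_real h - g x)) \<longlongrightarrow> 0) (at_right 0)"

text \<open>Spectrum of a (possibly unbounded) operator D given by its graph: c is in the resolvent
  set iff c - D : dom D \<rightarrow> L2 has a bounded two-sided inverse R.\<close>

definition rel_spectrum :: "'a measure \<Rightarrow> (('a \<Rightarrow> complex) \<Rightarrow> ('a \<Rightarrow> complex) \<Rightarrow> bool) \<Rightarrow> complex set" where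
  "rel_spectrum M D = {c. \<not> (\<exists>R. bounded_op M R \<and>
       (\<forall>f\<in>L2 M. D (R f) (\<lambda>x. c * R f x - f x)) \<and>
       (\<forall>f g. D f g \<longrightarrow> ae_eq M (R (\<lambda>x. c * f x - g x)) f))}"

definition op_spectrum :: "'a measure \<Rightarrow> (('a \<Rightarrow> complex) \<Rightarrow> ('a \<Rightarrow> complex)) \<Rightarrow> complex set" where
  "op_spectrum M T = {c. \<not> (\<exists>R. bounded_op M R \<and>
       (\<forall>f\<in>L2 M. ae_eq M (R (\<lambda>x. c * f x - T f x)) f \<and>
                  ae_eq M (\<lambda>x. c * R f x - T (R f) x) f))}"

end

theory Submission
  imports Defs "HOL-Real_Asymp.Real_Asymp"
begin

definition mm :: "nat \<Rightarrow> nat" where "mm n = n + 4"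
definition enc :: "nat \<Rightarrow> nat \<Rightarrow> real" where "enc n j = real (prod_encode (n,j))"
definition Om0 :: "(nat \<times> nat) set" where "Om0 = (SIGMA n:UNIV. {..<mm n})"
definition Om :: "real set" where "Om = (\<lambda>(n,j). enc n j) ` Om0"
definition bsum :: "(real \<Rightarrow> real) \<Rightarrow> nat \<Rightarrow> real" where
  "bsum g n = (\<Sum>j<mm n. g (enc n j))"

lemma enc_inj: "enc n j = enc n' j' \<longleftrightarrow> n = n' \<and> j = j'"
  unfolding enc_def by (metis of_nat_eq_iff prod_encode_eq prod.inject)

lemma bij_Om: "bij_betw (\<lambda>(n,j). enc n j) Om0 Om"
  unfolding Om_def by (rule inj_on_imp_bij_betw) (auto simp: inj_on_def enc_inj)

lemma nn_Om:
  assumes "\<And>x. 0 \<le> g x"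
  shows "(\<integral>\<^sup>+x. ennreal (g x) \<partial>count_space Om) = (\<Sum>n. ennreal (bsum g n))"
proof -
  have "(\<integral>\<^sup>+x. ennreal (g x) \<partial>count_space Om) =
        (\<integral>\<^sup>+p. ennreal (g ((\<lambda>(n,j). enc n j) p)) \<partial>count_space Om0)"
    by (rule nn_integral_bij_count_space[OF bij_Om, symmetric])
  also have "\<dots> = (\<integral>\<^sup>+p. ennreal (g ((\<lambda>(n,j). enc n j) p)) * indicator Om0 p \<partial>count_space UNIV)"
    by (rule nn_integral_count_space_indicator) simp
  also have "\<dots> = (\<integral>\<^sup>+n. \<integral>\<^sup>+j. ennreal (g (enc n j)) * indicator Om0 (n,j) \<partial>count_space UNIV \<partial>count_space UNIV)"
    by (rule nn_integral_fst_count_space[symmetric, where f = "\<lambda>p. ennreal (g ((\<lambda>(n,j). enc n j) p)) * indicator Om0 p", simplified])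
  also have "\<dots> = (\<integral>\<^sup>+n. ennreal (bsum g n) \<partial>count_space UNIV)"
  proof (rule nn_integral_cong)
    fix n :: nat
    have "(\<integral>\<^sup>+j. ennreal (g (enc n j)) * indicator Om0 (n,j) \<partial>count_space UNIV)
        = (\<integral>\<^sup>+j. ennreal (g (enc n j)) * indicator {..<mm n} j \<partial>count_space UNIV)"
      by (rule nn_integral_cong) (auto simp: Om0_def indicator_def)
    also have "\<dots> = (\<integral>\<^sup>+j. ennreal (g (enc n j)) \<partial>count_space {..<mm n})"
      by (rule nn_integral_count_space_indicator[symmetric]) simp
    also have "\<dots> = (\<Sum>j<mm n. ennreal (g (enc n j)))"
      by (rule nn_integral_count_space_finite) simp
    also have "\<dots> = ennreal (bsum g n)"
      unfolding bsum_def using assms by (simp add: sum_ennreal)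
    finally show "(\<integral>\<^sup>+j. ennreal (g (enc n j)) * indicator Om0 (n,j) \<partial>count_space UNIV) = ennreal (bsum g n)" .
  qed
  also have "\<dots> = (\<Sum>n. ennreal (bsum g n))"
    by (rule nn_integral_count_space_nat)
  finally show ?thesis .
qed

definition blk :: "(real \<Rightarrow> complex) \<Rightarrow> nat \<Rightarrow> real" where
  "blk f = bsum (\<lambda>x. (cmod (f x))\<^sup>2)"

lemma blk_nonneg: "0 \<le> blk f n"
  unfolding blk_def bsum_def by (auto intro: sum_nonneg)

lemma L2_Om: "f \<in> L2 (count_space Om) \<longleftrightarrow> summable (blk f)"
proof -
  have "f \<in> L2 (count_space Om) \<longleftrightarrow> (\<integral>\<^sup>+x. ennreal ((cmod (f x))\<^sup>2) \<partial>count_space Om) < \<infinity>"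
    unfolding L2_def by (simp add: integrable_iff_bounded)
  also have "\<dots> \<longleftrightarrow> (\<Sum>n. ennreal (blk f n)) < \<infinity>"
    by (subst nn_Om) (auto simp: blk_def)
  also have "\<dots> \<longleftrightarrow> summable (blk f)"
  proof
    assume "(\<Sum>n. ennreal (blk f n)) < \<infinity>"
    hence "(\<Sum>n. ennreal (blk f n)) \<noteq> top" by auto
    thus "summable (blk f)" by (rule summable_suminf_not_top[OF blk_nonneg])
  next
    assume "summable (blk f)"
    hence "(\<Sum>n. ennreal (blk f n)) = ennreal (\<Sum>n. blk f n)" by (rule suminf_ennreal2[OF blk_nonneg])
    thus "(\<Sum>n. ennreal (blk f n)) < \<infinity>" by simp
  qed
  finally show ?thesis .
qed

lemma norm_Om:
  assumes "f \<in> L2 (count_space Om)"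
  shows "Ltwo_norm (count_space Om) f = sqrt (\<Sum>n. blk f n)"
proof -
  have s: "summable (blk f)" using assms L2_Om by blast
  have "(\<integral>x. (cmod (f x))\<^sup>2 \<partial>count_space Om) = enn2real (\<integral>\<^sup>+x. ennreal ((cmod (f x))\<^sup>2) \<partial>count_space Om)"
    by (rule integral_eq_nn_integral) auto
  also have "\<dots> = enn2real (\<Sum>n. ennreal (blk f n))"
    by (subst nn_Om) (auto simp: blk_def)
  also have "\<dots> = (\<Sum>n. blk f n)"
  proof -
    have e: "(\<Sum>n. ennreal (blk f n)) = ennreal (\<Sum>n. blk f n)"
      by (rule suminf_ennreal2[OF blk_nonneg s])
    have "0 \<le> (\<Sum>n. blk f n)" using suminf_nonneg[OF s] blk_nonneg by blast
    thus ?thesis unfolding e by (rule enn2real_ennreal)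
  qed
  finally show ?thesis unfolding Ltwo_norm_def by simp
qed

lemma ae_Om: "ae_eq (count_space Om) f g \<longleftrightarrow> (\<forall>n j. j < mm n \<longrightarrow> f (enc n j) = g (enc n j))"
  unfolding ae_eq_def AE_count_space Om_def Om0_def by auto

lemma Om_cases: "x \<in> Om \<Longrightarrow> (\<And>n j. j < mm n \<Longrightarrow> x = enc n j \<Longrightarrow> P) \<Longrightarrow> P"
  unfolding Om_def Om0_def by auto

lemma sigma_Om: "sigma_finite_measure (count_space Om)"
  by (rule sigma_finite_measure_count_space_countable) (simp add: Om_def Om0_def)

subsection \<open>Discrete Fourier transform on blocks\<close>

definition th :: "nat \<Rightarrow> real" where "th n = 2 * pi / real (mm n)"
definition om :: "nat \<Rightarrow> complex" where "om n = cis (th n)"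
definition fhat :: "(real \<Rightarrow> complex) \<Rightarrow> nat \<Rightarrow> nat \<Rightarrow> complex" where
  "fhat f n l = (\<Sum>j<mm n. f (enc n j) * cnj (om n) ^ (l * j)) / sqrt (mm n)"
definition ifft :: "(nat \<Rightarrow> complex) \<Rightarrow> nat \<Rightarrow> nat \<Rightarrow> complex" where
  "ifft a n j = (\<Sum>l<mm n. a l * om n ^ (l * j)) / sqrt (mm n)"
definition dec :: "real \<Rightarrow> nat \<times> nat" where "dec x = prod_decode (nat \<lfloor>x\<rfloor>)"
definition Syn :: "(nat \<Rightarrow> nat \<Rightarrow> complex) \<Rightarrow> real \<Rightarrow> complex" where
  "Syn a x = ifft (a (fst (dec x))) (fst (dec x)) (snd (dec x))"

lemma dec_enc[simp]: "dec (enc n j) = (n, j)"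
  unfolding dec_def enc_def by simp

lemma Syn_enc[simp]: "Syn a (enc n j) = ifft (a n) n j"
  unfolding Syn_def by simp

lemma mm_pos: "0 < mm n" unfolding mm_def by simp

lemma orth:
  assumes "i < mm n"
  shows "(\<Sum>l<mm n. (om n ^ a * cnj (om n) ^ i) ^ l) = (if a mod mm n = i then of_nat (mm n) else 0)"
proof -
  let ?m = "mm n"
  have om_m: "om n ^ ?m = 1"
  proof -
    have "om n ^ ?m = cis (real ?m * th n)" by (simp add: om_def Complex.DeMoivre)
    also have "real ?m * th n = 2 * pi" unfolding th_def using mm_pos[of n] by simp
    finally show ?thesis by simp
  qed
  have "om n ^ a = om n ^ (a mod ?m)"
    by (metis (no_types, lifting) mod_mult_div_eq om_m power_add power_mult power_one mult_1_right mult.commute)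
  hence z: "om n ^ a * cnj (om n) ^ i = cis ((real (a mod ?m) - real i) * th n)"
  proof -
    have "om n ^ a * cnj (om n) ^ i = cis (real (a mod ?m) * th n) * cis (- (real i * th n))"
      using \<open>om n ^ a = om n ^ (a mod ?m)\<close> unfolding om_def
      by (simp only: Complex.DeMoivre flip: complex_cnj_power cis_cnj)
    also have "\<dots> = cis ((real (a mod ?m) - real i) * th n)"
      by (simp add: cis_mult algebra_simps)
    finally show ?thesis .
  qed
  show ?thesis
  proof (cases "a mod ?m = i")
    case True
    hence "om n ^ a * cnj (om n) ^ i = 1" unfolding z by simp
    hence "(\<Sum>l<mm n. (om n ^ a * cnj (om n) ^ i) ^ l) = (\<Sum>l<mm n. 1)" by (simp only: power_one)
    then show ?thesis using True by simp
  next
    case False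
    let ?z = "om n ^ a * cnj (om n) ^ i"
    have zm: "?z ^ ?m = 1"
    proof -
      have "?z ^ ?m = (om n ^ a) ^ ?m * (cnj (om n) ^ i) ^ ?m" by (rule power_mult_distrib)
      also have "(om n ^ a) ^ ?m = (om n ^ ?m) ^ a" by (simp only: power_mult[symmetric] mult.commute)
      also have "(cnj (om n) ^ i) ^ ?m = cnj ((om n ^ ?m) ^ i)" by (simp only: power_mult[symmetric] mult.commute complex_cnj_power)
      finally show ?thesis using om_m by simp
    qed
    have "?z \<noteq> 1"
    proof
      assume z1: "?z = 1"
      have "cos ((real (a mod ?m) - real i) * th n) = Re ?z" unfolding z by simp
      hence "cos ((real (a mod ?m) - real i) * th n) = 1" using z1 by simp
      then obtain k :: int where k: "(real (a mod ?m) - real i) * th n = real_of_int k * 2 * pi"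
        using cos_one_2pi_int by blast
      hence e: "(real (a mod ?m) - real i) * (2 * pi) = (real_of_int k * real ?m) * (2 * pi)"
        unfolding th_def using mm_pos[of n] by (simp add: field_simps)
      have "real (a mod ?m) - real i = k * real ?m"
        using e by (subst (asm) mult_right_cancel) auto
      moreover have "a mod ?m < ?m" using mm_pos[of n] by simp
      ultimately have "\<bar>real_of_int k\<bar> * real ?m < 1 * real ?m"
      proof -
        assume h1: "real (a mod ?m) - real i = k * real ?m" and h2: "a mod ?m < ?m"
        have r1: "real (a mod ?m) < real ?m" using h2 by simp
        have r2: "real i < real ?m" using assms by simp
        have "\<bar>real (a mod ?m) - real i\<bar> < real ?m" using r1 r2 by linarith
        thus ?thesis using h1 by (simp add: abs_mult)
      qed
      hence "\<bar>real_of_int k\<bar> < 1" using mm_pos[of n]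
        by (simp only: mult_less_cancel_right)
      hence "k = 0" by linarith
      thus False using \<open>real (a mod ?m) - real i = k * real ?m\<close> False by simp
    qed
    hence "(\<Sum>l<?m. ?z ^ l) = (?z ^ ?m - 1) / (?z - 1)" by (rule geometric_sum)
    then show ?thesis using zm False by simp
  qed
qed

lemma pow_swap: "cnj w ^ (l * i) * w ^ (l * j) = (w ^ j * cnj w ^ i) ^ l"
proof -
  have "(w ^ j * cnj w ^ i) ^ l = (w ^ j) ^ l * (cnj w ^ i) ^ l" by (rule power_mult_distrib)
  also have "\<dots> = w ^ (l * j) * cnj w ^ (l * i)" by (simp only: power_mult[symmetric] mult.commute)
  finally show ?thesis by (simp only: mult.commute)
qed
lemma pow_swap2: "w ^ (l * j) * cnj w ^ (k * j) = (w ^ l * cnj w ^ k) ^ j"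
proof -
  have "(w ^ l * cnj w ^ k) ^ j = (w ^ l) ^ j * (cnj w ^ k) ^ j" by (rule power_mult_distrib)
  also have "\<dots> = w ^ (l * j) * cnj w ^ (k * j)" by (simp only: power_mult[symmetric])
  finally show ?thesis by simp
qed
lemma sqrt_sq_c: "complex_of_real (sqrt (real (mm n))) * complex_of_real (sqrt (real (mm n))) = of_nat (mm n)"
proof -
  have "sqrt (real (mm n)) * sqrt (real (mm n)) = real (mm n)" by simp
  hence "complex_of_real (sqrt (real (mm n)) * sqrt (real (mm n))) = complex_of_real (real (mm n))" by simp
  thus ?thesis by (simp only: of_real_mult of_real_of_nat_eq)
qed

lemma gen_dsum: "(\<Sum>l\<in>LL. ((\<Sum>i\<in>II. F i * A l i) / ss) * B l) / ss = (\<Sum>l\<in>LL. \<Sum>i\<in>II. F i * (A l i * B l)) / (ss * (ss::complex))"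
  by (simp add: sum_distrib_right sum_divide_distrib mult.assoc)

lemma mult_if_delta: "x * (if P then M else 0) = (if P then x * M else (0::complex))"
  by simp

lemma inv1:
  assumes "j < mm n"
  shows "ifft (fhat f n) n j = f (enc n j)"
proof -
  let ?m = "mm n"
  have "ifft (fhat f n) n j = (\<Sum>l<?m. \<Sum>i<?m. f (enc n i) * (om n ^ j * cnj (om n) ^ i) ^ l) / of_nat ?m"
    unfolding ifft_def fhat_def
    by (simp only: gen_dsum pow_swap sqrt_sq_c)
  also have "\<dots> = (\<Sum>i<?m. f (enc n i) * (\<Sum>l<?m. (om n ^ j * cnj (om n) ^ i) ^ l)) / of_nat ?m"
    by (subst sum.swap) (simp add: sum_distrib_left)
  also have "\<dots> = (\<Sum>i<?m. f (enc n i) * (if i = j then of_nat ?m else 0)) / of_nat ?m"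
    by (intro arg_cong2[where f="(/)"] sum.cong refl) (use assms in \<open>auto simp: orth\<close>)
  also have "\<dots> = f (enc n j)"
    using assms mm_pos[of n] by (simp add: mult_if_delta sum.delta)
  finally show ?thesis .
qed

lemma fhat_Syn:
  assumes "l < mm n"
  shows "fhat (Syn a) n l = a n l"
proof -
  let ?m = "mm n"
  have "fhat (Syn a) n l = (\<Sum>j<?m. \<Sum>k<?m. a n k * (om n ^ k * cnj (om n) ^ l) ^ j) / of_nat ?m"
    unfolding ifft_def fhat_def Syn_enc
    by (simp only: gen_dsum pow_swap2 sqrt_sq_c)
  also have "\<dots> = (\<Sum>k<?m. a n k * (\<Sum>j<?m. (om n ^ k * cnj (om n) ^ l) ^ j)) / of_nat ?m"
    by (subst sum.swap) (simp add: sum_distrib_left)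
  also have "\<dots> = (\<Sum>k<?m. a n k * (if k = l then of_nat ?m else 0)) / of_nat ?m"
    by (intro arg_cong2[where f="(/)"] sum.cong refl) (use assms in \<open>auto simp: orth\<close>)
  also have "\<dots> = a n l"
    using assms mm_pos[of n] by (simp add: mult_if_delta sum.delta)
  finally show ?thesis .
qed


lemma gen_swap: "(\<Sum>j\<in>J. f j * ((\<Sum>l\<in>LL. G l * H l j) / (ss::complex))) = (\<Sum>l\<in>LL. G l * ((\<Sum>j\<in>J. f j * H l j) / ss))"
proof -
  have "(\<Sum>j\<in>J. f j * ((\<Sum>l\<in>LL. G l * H l j) / ss)) = (\<Sum>j\<in>J. \<Sum>l\<in>LL. G l * (f j * H l j) / ss)"
    by (simp add: sum_distrib_left sum_divide_distrib mult_ac)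
  also have "\<dots> = (\<Sum>l\<in>LL. \<Sum>j\<in>J. G l * (f j * H l j) / ss)" by (rule sum.swap)
  also have "\<dots> = (\<Sum>l\<in>LL. G l * ((\<Sum>j\<in>J. f j * H l j) / ss))"
    by (simp add: sum_distrib_left sum_divide_distrib mult_ac)
  finally show ?thesis .
qed

lemma parseval: "blk f n = (\<Sum>l<mm n. (cmod (fhat f n l))\<^sup>2)"
proof -
  let ?m = "mm n" and ?s = "complex_of_real (sqrt (real (mm n)))"
  have "complex_of_real (blk f n) = (\<Sum>j<?m. f (enc n j) * cnj (f (enc n j)))"
    unfolding blk_def bsum_def by (simp only: of_real_sum complex_norm_square)
  also have "\<dots> = (\<Sum>j<?m. f (enc n j) * cnj (ifft (fhat f n) n j))"
    by (rule sum.cong) (auto simp: inv1)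
  also have "\<dots> = (\<Sum>j<?m. f (enc n j) * ((\<Sum>l<?m. cnj (fhat f n l) * cnj (om n) ^ (l * j)) / ?s))"
    by (rule sum.cong) (auto simp: ifft_def)
  also have "\<dots> = (\<Sum>l<?m. cnj (fhat f n l) * ((\<Sum>j<?m. f (enc n j) * cnj (om n) ^ (l * j)) / ?s))"
    by (rule gen_swap)
  also have "\<dots> = (\<Sum>l<?m. fhat f n l * cnj (fhat f n l))"
    by (rule sum.cong) (auto simp: fhat_def)
  also have "\<dots> = complex_of_real (\<Sum>l<?m. (cmod (fhat f n l))\<^sup>2)"
    by (simp only: of_real_sum complex_norm_square)
  finally show ?thesis by (simp only: of_real_eq_iff)
qed

lemma fhat_lin: "fhat (\<lambda>x. a * f x + b * g x) n l = a * fhat f n l + b * fhat g n l"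
  unfolding fhat_def by (simp add: sum.distrib sum_distrib_left algebra_simps add_divide_distrib)

lemma Syn_lin: "Syn (\<lambda>n l. a * u n l + b * v n l) x = a * Syn u x + b * Syn v x"
  unfolding Syn_def ifft_def by (simp add: sum.distrib sum_distrib_left algebra_simps add_divide_distrib)

lemma fhat_cong: "(\<And>j. j < mm n \<Longrightarrow> f (enc n j) = g (enc n j)) \<Longrightarrow> fhat f n l = fhat g n l"
  unfolding fhat_def by (auto intro!: sum.cong arg_cong2[where f="(/)"])

lemma Syn_cong: "(\<And>n l. l < mm n \<Longrightarrow> a n l = b n l) \<Longrightarrow> Syn a x = Syn b x"
  unfolding Syn_def ifft_def by (auto intro!: sum.cong arg_cong2[where f="(/)"])

lemma Syn_fhat: "j < mm n \<Longrightarrow> Syn (fhat f) (enc n j) = f (enc n j)"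
  by (simp add: inv1)

lemma blk_Syn: "blk (Syn a) n = (\<Sum>l<mm n. (cmod (a n l))\<^sup>2)"
  unfolding parseval by (rule sum.cong) (auto simp: fhat_Syn)

definition cf :: "(nat \<Rightarrow> nat \<Rightarrow> complex) \<Rightarrow> nat \<Rightarrow> real" where
  "cf a n = (\<Sum>l<mm n. (cmod (a n l))\<^sup>2)"

lemma cf_nonneg: "0 \<le> cf a n" unfolding cf_def by (auto intro: sum_nonneg)

lemma L2_Syn: "Syn a \<in> L2 (count_space Om) \<longleftrightarrow> summable (cf a)"
  unfolding L2_Om cf_def blk_Syn[abs_def] ..

lemma norm_Syn: "summable (cf a) \<Longrightarrow> Ltwo_norm (count_space Om) (Syn a) = sqrt (\<Sum>n. cf a n)"
  using norm_Om[of "Syn a"] L2_Syn[of a] unfolding cf_def blk_Syn[abs_def] by simp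

lemma blk_fhat: "blk f = cf (fhat f)"
  unfolding cf_def parseval[abs_def] ..

lemma L2_fhat: "f \<in> L2 (count_space Om) \<longleftrightarrow> summable (cf (fhat f))"
  unfolding L2_Om blk_fhat ..

lemma norm_fhat: "f \<in> L2 (count_space Om) \<Longrightarrow> Ltwo_norm (count_space Om) f = sqrt (\<Sum>n. cf (fhat f) n)"
  using norm_Om[of f] unfolding blk_fhat by simp

definition tt :: "nat \<Rightarrow> real" where "tt n = (1 - cos (th n)) / sin (th n)"
definition kk :: "nat \<Rightarrow> real" where "kk n = of_int (\<lfloor>1 / tt n\<rfloor> + 1)"
definition bb :: "nat \<Rightarrow> real" where "bb n = kk n / sin (th n)"
definition lam :: "nat \<Rightarrow> nat \<Rightarrow> complex" where "lam n l = complex_of_real (2 - bb n) + complex_of_real (bb n) * om n ^ l"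

lemma th_pos: "0 < th n" unfolding th_def using mm_pos[of n] by simp
lemma th_le: "th n \<le> pi / 2" unfolding th_def mm_def by (simp add: field_simps)
lemma sin_th: "0 < sin (th n)" using th_pos[of n] th_le[of n] by (intro sin_gt_zero) auto
lemma cos_th: "0 \<le> cos (th n)" using th_pos[of n] th_le[of n] by (intro cos_ge_zero) auto
lemma cos_th1: "cos (th n) < 1"
proof -
  have "cos (th n) \<noteq> 1"
  proof
    assume "cos (th n) = 1"
    hence "sin (th n) ^ 2 = 0" using sin_cos_squared_add[of "th n"] by simp
    thus False using sin_th[of n] by simp
  qed
  thus ?thesis using cos_le_one[of "th n"] by linarith
qed
lemma tt_pos: "0 < tt n" unfolding tt_def using sin_th[of n] cos_th1[of n] by simp
lemma kk_gt: "1 < kk n * tt n"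
proof -
  have "1 / tt n < kk n" unfolding kk_def by linarith
  thus ?thesis using tt_pos[of n] by (simp add: field_simps)
qed
lemma kk_le: "kk n * tt n \<le> 1 + tt n"
proof -
  have "kk n \<le> 1 / tt n + 1" unfolding kk_def by linarith
  hence "kk n * tt n \<le> (1 / tt n + 1) * tt n" using tt_pos[of n] by (intro mult_right_mono) auto
  moreover have "(1 / tt n + 1) * tt n = 1 + tt n" using tt_pos[of n] by (simp add: field_simps)
  ultimately show ?thesis by linarith
qed
lemma kk_pos: "0 < kk n"
proof -
  have "0 < kk n * tt n" using kk_gt[of n] by simp
  thus ?thesis using tt_pos[of n] by (auto simp: zero_less_mult_iff)
qed
lemma kk_int: "kk n \<in> \<int>" unfolding kk_def by simp
lemma bb_pos: "0 < bb n" unfolding bb_def using kk_pos[of n] sin_th[of n] by simp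
lemma bb_cos: "bb n * (1 - cos (th n)) = kk n * tt n"
  unfolding bb_def tt_def by simp

lemma om_pow: "om n ^ l = cis (real l * th n)"
  unfolding om_def by (simp add: Complex.DeMoivre)

lemma Re_lam: "Re (lam n l) = 2 - bb n * (1 - cos (real l * th n))"
  unfolding lam_def om_pow by (simp add: algebra_simps)

lemma Im_lam: "Im (lam n l) = bb n * sin (real l * th n)"
  unfolding lam_def om_pow by simp

lemma Re_lam_le: "Re (lam n l) \<le> 2"
  unfolding Re_lam using bb_pos[of n] cos_le_one[of "real l * th n"] by simp

lemma lam1: "lam n 1 = Complex (2 - kk n * tt n) (kk n)"
proof (rule complex_eqI)
  show "Re (lam n 1) = Re (Complex (2 - kk n * tt n) (kk n))"
    unfolding Re_lam using bb_cos[of n] by simp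
  show "Im (lam n 1) = Im (Complex (2 - kk n * tt n) (kk n))"
    unfolding Im_lam bb_def using sin_th[of n] by simp
qed

lemma lam_last: "lam n (mm n - 1) = Complex (2 - kk n * tt n) (- kk n)"
proof -
  have a: "real (mm n - 1) * th n = 2 * pi - th n"
    unfolding th_def using mm_pos[of n] by (simp add: of_nat_diff field_simps)
  show ?thesis
  proof (rule complex_eqI)
    show "Re (lam n (mm n - 1)) = Re (Complex (2 - kk n * tt n) (- kk n))"
      unfolding Re_lam a using bb_cos[of n] by simp
    show "Im (lam n (mm n - 1)) = Im (Complex (2 - kk n * tt n) (- kk n))"
      unfolding Im_lam a bb_def using sin_th[of n] by simp
  qed
qed

lemma cos_mid:
  assumes "2 \<le> l" "l + 2 \<le> mm n"
  shows "cos (real l * th n) \<le> cos (2 * th n)"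
proof (cases "real l * th n \<le> pi")
  case True
  show ?thesis
    by (rule cos_monotone_0_pi_le) (use True th_pos[of n] assms in \<open>auto intro!: mult_right_mono\<close>)
next
  case False
  have e: "real l * th n = 2 * pi - real (mm n - l) * th n"
    unfolding th_def using assms mm_pos[of n] by (simp add: of_nat_diff field_simps)
  have "cos (real l * th n) = cos (real (mm n - l) * th n)"
    unfolding e by simp
  also have "\<dots> \<le> cos (2 * th n)"
  proof (rule cos_monotone_0_pi_le)
    show "0 \<le> 2 * th n" using th_pos[of n] by simp
    show "2 * th n \<le> real (mm n - l) * th n" using assms th_pos[of n] by (intro mult_right_mono) auto
    show "real (mm n - l) * th n \<le> pi" using False e by linarith
  qed
  finally show ?thesis .
qed

lemma Re_lam_mid:
  assumes "2 \<le> l" "l + 2 \<le> mm n"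
  shows "Re (lam n l) < 0"
proof -
  have c2: "1 - cos (2 * th n) = 2 * (1 - cos (th n)) * (1 + cos (th n))"
    by (simp only: cos_double_cos) (simp add: algebra_simps power2_eq_square)
  have "2 * (1 - cos (th n)) \<le> 1 - cos (2 * th n)"
    unfolding c2 using cos_th[of n] cos_th1[of n] by (simp add: mult_left_mono)
  also have "\<dots> \<le> 1 - cos (real l * th n)" using cos_mid[OF assms] by simp
  finally have "bb n * (2 * (1 - cos (th n))) \<le> bb n * (1 - cos (real l * th n))"
    using bb_pos[of n] by (intro mult_left_mono) auto
  moreover have "bb n * (2 * (1 - cos (th n))) = 2 * (kk n * tt n)"
    by (subst bb_cos[of n, symmetric]) (simp only: mult_ac)
  ultimately have "2 * (kk n * tt n) \<le> bb n * (1 - cos (real l * th n))" by simp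
  thus ?thesis unfolding Re_lam using kk_gt[of n] by simp
qed

lemma tt_lim: "tt \<longlonglongrightarrow> 0"
proof -
  have "((\<lambda>n::nat. (1 - cos (2*pi/(real n + 4))) / sin (2*pi/(real n + 4))) \<longlongrightarrow> 0) at_top"
    by real_asymp
  moreover have "tt = (\<lambda>n::nat. (1 - cos (2*pi/(real n + 4))) / sin (2*pi/(real n + 4)))"
    unfolding tt_def th_def mm_def by (auto simp: add.commute)
  ultimately show ?thesis by simp
qed

lemma kktt_lim: "(\<lambda>n. kk n * tt n) \<longlonglongrightarrow> 1"
proof (rule real_tendsto_sandwich[where f = "\<lambda>_. 1" and h = "\<lambda>n. 1 + tt n"])
  show "\<forall>\<^sub>F n in sequentially. 1 \<le> kk n * tt n" using kk_gt by (simp add: less_imp_le)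
  show "\<forall>\<^sub>F n in sequentially. kk n * tt n \<le> 1 + tt n" using kk_le by simp
  show "(\<lambda>n. 1 + tt n) \<longlonglongrightarrow> 1" using tendsto_add[OF tendsto_const tt_lim, of 1] by simp
qed simp

lemma kk_big: "\<forall>\<^sub>F n in sequentially. Y \<le> kk n"
proof -
  have "\<forall>\<^sub>F n in sequentially. tt n < 1 / (\<bar>Y\<bar> + 1)"
    using order_tendstoD(2)[OF tt_lim, of "1 / (\<bar>Y\<bar> + 1)"] by simp
  thus ?thesis
  proof (rule eventually_mono)
    fix n assume h: "tt n < 1 / (\<bar>Y\<bar> + 1)"
    have "\<bar>Y\<bar> + 1 < 1 / tt n" using h tt_pos[of n] by (simp add: field_simps)
    also have "1 / tt n < kk n" unfolding kk_def by linarith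
    finally show "Y \<le> kk n" by linarith
  qed
qed

definition Mult :: "(nat \<Rightarrow> nat \<Rightarrow> complex) \<Rightarrow> (real \<Rightarrow> complex) \<Rightarrow> real \<Rightarrow> complex" where
  "Mult \<phi> f = Syn (\<lambda>n l. \<phi> n l * fhat f n l)"

lemma fhat_Mult: "l < mm n \<Longrightarrow> fhat (Mult \<phi> f) n l = \<phi> n l * fhat f n l"
  unfolding Mult_def by (rule fhat_Syn)

lemma Mult_enc: "j < mm n \<Longrightarrow> Mult (\<lambda>n l. 1) f (enc n j) = f (enc n j)"
  unfolding Mult_def by (simp add: inv1)

lemma Mult_Mult: "Mult \<phi> (Mult \<psi> f) = Mult (\<lambda>n l. \<phi> n l * \<psi> n l) f"
  unfolding Mult_def[of \<phi>] Mult_def[of "\<lambda>n l. \<phi> n l * \<psi> n l"]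
  by (rule ext, rule Syn_cong) (simp add: fhat_Mult mult.assoc)

lemma Mult_cong_fun: "(\<And>j n. j < mm n \<Longrightarrow> f (enc n j) = g (enc n j)) \<Longrightarrow> Mult \<phi> f = Mult \<phi> g"
  unfolding Mult_def by (rule ext, rule Syn_cong) (simp add: fhat_cong[of _ f g])

lemma Mult_lin: "Mult \<phi> (\<lambda>x. a * f x + b * g x) = (\<lambda>x. a * Mult \<phi> f x + b * Mult \<phi> g x)"
proof
  fix x
  have "Mult \<phi> (\<lambda>x. a * f x + b * g x) x = Syn (\<lambda>n l. a * (\<phi> n l * fhat f n l) + b * (\<phi> n l * fhat g n l)) x"
    unfolding Mult_def fhat_lin by (simp add: algebra_simps)
  also have "\<dots> = a * Mult \<phi> f x + b * Mult \<phi> g x"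
    unfolding Mult_def by (rule Syn_lin)
  finally show "Mult \<phi> (\<lambda>x. a * f x + b * g x) x = a * Mult \<phi> f x + b * Mult \<phi> g x" .
qed

lemma cf_Mult_le:
  assumes "\<And>n l. l < mm n \<Longrightarrow> cmod (\<phi> n l) \<le> B"
  shows "cf (\<lambda>n l. \<phi> n l * a n l) n \<le> B\<^sup>2 * cf a n"
proof -
  have "cf (\<lambda>n l. \<phi> n l * a n l) n = (\<Sum>l<mm n. (cmod (\<phi> n l))\<^sup>2 * (cmod (a n l))\<^sup>2)"
    unfolding cf_def by (simp add: norm_mult power_mult_distrib)
  also have "\<dots> \<le> (\<Sum>l<mm n. B\<^sup>2 * (cmod (a n l))\<^sup>2)"
    by (intro sum_mono mult_right_mono power_mono) (auto simp: assms)
  also have "\<dots> = B\<^sup>2 * cf a n" unfolding cf_def by (simp add: sum_distrib_left)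
  finally show ?thesis .
qed

lemma B_nonneg:
  assumes "\<And>n l. l < mm n \<Longrightarrow> cmod (\<phi> n l) \<le> B" shows "0 \<le> B"
proof -
  have "cmod (\<phi> 0 0) \<le> B" using assms mm_pos[of 0] by blast
  thus ?thesis using norm_ge_zero[of "\<phi> 0 0"] by linarith
qed

lemma L2_Mult:
  assumes "\<And>n l. l < mm n \<Longrightarrow> cmod (\<phi> n l) \<le> B" "f \<in> L2 (count_space Om)"
  shows "Mult \<phi> f \<in> L2 (count_space Om)"
proof -
  have s: "summable (cf (fhat f))" using assms(2) L2_fhat by blast
  have "summable (cf (\<lambda>n l. \<phi> n l * fhat f n l))"
    by (rule summable_comparison_test'[OF summable_mult[OF s, of "B\<^sup>2"]])
       (auto simp: cf_nonneg cf_Mult_le[OF assms(1)])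
  thus ?thesis unfolding Mult_def L2_Syn .
qed

lemma norm_Mult:
  assumes "\<And>n l. l < mm n \<Longrightarrow> cmod (\<phi> n l) \<le> B" "f \<in> L2 (count_space Om)"
  shows "Ltwo_norm (count_space Om) (Mult \<phi> f) \<le> B * Ltwo_norm (count_space Om) f"
proof -
  have B0: "0 \<le> B" by (rule B_nonneg[OF assms(1)])
  have s: "summable (cf (fhat f))" using assms(2) L2_fhat by blast
  have s2: "summable (cf (\<lambda>n l. \<phi> n l * fhat f n l))"
    by (rule summable_comparison_test'[OF summable_mult[OF s, of "B\<^sup>2"]])
       (auto simp: cf_nonneg cf_Mult_le[OF assms(1)])
  have "Ltwo_norm (count_space Om) (Mult \<phi> f) = sqrt (\<Sum>n. cf (\<lambda>n l. \<phi> n l * fhat f n l) n)"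
    unfolding Mult_def by (rule norm_Syn[OF s2])
  also have "\<dots> \<le> sqrt (\<Sum>n. B\<^sup>2 * cf (fhat f) n)"
    by (intro real_sqrt_le_mono suminf_le summable_mult s s2 cf_Mult_le[OF assms(1)])
  also have "\<dots> = sqrt (B\<^sup>2 * (\<Sum>n. cf (fhat f) n))" by (simp add: suminf_mult[OF s])
  also have "\<dots> = B * sqrt (\<Sum>n. cf (fhat f) n)" using B0 by (simp add: real_sqrt_mult)
  also have "\<dots> = B * Ltwo_norm (count_space Om) f" using norm_fhat[OF assms(2)] by simp
  finally show ?thesis .
qed

lemma bounded_Mult:
  assumes "\<And>n l. l < mm n \<Longrightarrow> cmod (\<phi> n l) \<le> B"
  shows "bounded_op (count_space Om) (Mult \<phi>)"
  unfolding bounded_op_def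
proof (intro conjI ballI allI impI)
  fix f assume "f \<in> L2 (count_space Om)"
  thus "Mult \<phi> f \<in> L2 (count_space Om)" using L2_Mult[of \<phi> B, OF assms] by blast
next
  fix f g assume "ae_eq (count_space Om) f g"
  hence "Mult \<phi> f = Mult \<phi> g" unfolding ae_Om by (intro Mult_cong_fun) auto
  thus "ae_eq (count_space Om) (Mult \<phi> f) (Mult \<phi> g)" by (simp add: ae_eq_def)
next
  fix f g a b
  show "ae_eq (count_space Om) (Mult \<phi> (\<lambda>x. a * f x + b * g x)) (\<lambda>x. a * Mult \<phi> f x + b * Mult \<phi> g x)"
    unfolding Mult_lin by (simp add: ae_eq_def)
next
  show "\<exists>C. \<forall>f\<in>L2 (count_space Om). Ltwo_norm (count_space Om) (Mult \<phi> f) \<le> C * Ltwo_norm (count_space Om) f"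
    using norm_Mult[of \<phi> B, OF assms] by blast
qed

lemma suminf_tendsto0:
  fixes a :: "'b \<Rightarrow> nat \<Rightarrow> real"
  assumes g: "summable g"
      and bound: "eventually (\<lambda>h. \<forall>n. 0 \<le> a h n \<and> a h n \<le> g n) F"
      and lim: "\<And>n. ((\<lambda>h. a h n) \<longlongrightarrow> 0) F"
  shows "((\<lambda>h. \<Sum>n. a h n) \<longlongrightarrow> 0) F"
proof (rule tendstoI)
  fix e :: real assume e: "0 < e"
  obtain N where N: "norm (\<Sum>i. g (i + N)) < e / 2"
    using suminf_exist_split[OF _ g, of "e/2"] e by auto
  have "((\<lambda>h. \<Sum>n<N. a h n) \<longlongrightarrow> (\<Sum>n<N. 0)) F"
    by (intro tendsto_sum lim)
  hence "eventually (\<lambda>h. dist (\<Sum>n<N. a h n) 0 < e / 2) F"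
    using e by (intro tendstoD) auto
  with bound show "eventually (\<lambda>h. dist (\<Sum>n. a h n) 0 < e) F"
  proof (eventually_elim)
    case (elim h)
    have nn: "\<And>n. 0 \<le> a h n" and le: "\<And>n. a h n \<le> g n" using elim(1) by auto
    have sa: "summable (a h)"
      by (rule summable_comparison_test'[OF g]) (use nn le in auto)
    have sg: "summable (\<lambda>i. g (i + N))" using g by (simp add: summable_iff_shift)
    have sa2: "summable (\<lambda>i. a h (i + N))" using sa by (simp add: summable_iff_shift)
    have "(\<Sum>n. a h n) = (\<Sum>i. a h (i + N)) + (\<Sum>n<N. a h n)"
      by (rule suminf_split_initial_segment[OF sa])
    moreover have "(\<Sum>i. a h (i + N)) \<le> (\<Sum>i. g (i + N))"
      by (rule suminf_le) (use le sa2 sg in auto)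
    moreover have "0 \<le> (\<Sum>n. a h n)" by (rule suminf_nonneg[OF sa nn])
    moreover have "(\<Sum>n<N. a h n) < e / 2" using elim(2) by (simp add: dist_real_def)
    moreover have "(\<Sum>i. g (i + N)) < e / 2" using N by simp
    ultimately show ?case by (simp add: dist_real_def)
  qed
qed

lemma exp_sub1_bound: "cmod (exp z - 1) \<le> cmod z * exp (max 0 (Re z))"
proof -
  have "norm (exp z - exp 0) \<le> exp (max 0 (Re z)) * norm (z - 0)"
  proof (rule field_differentiable_bound[where f = exp and f' = exp and S = "closed_segment 0 z"])
    show "convex (closed_segment 0 z)" by simp
    show "(exp has_field_derivative exp w) (at w within closed_segment 0 z)" for w
      by (rule DERIV_subset[OF DERIV_exp]) simp
    show "norm (exp w) \<le> exp (max 0 (Re z))" if hw: "w \<in> closed_segment 0 z" for w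
    proof -
      obtain u where u: "0 \<le> u" "u \<le> 1" "w = u *\<^sub>R z" using hw by (auto simp: in_segment)
      have "Re w = u * Re z" using u by simp
      also have "\<dots> \<le> max 0 (Re z)"
        using u by (cases "0 \<le> Re z") (auto intro: mult_left_le_one_le mult_nonneg_nonpos order_trans[of _ 0] simp: mult_le_0_iff)
      finally show ?thesis by (simp add: norm_exp_eq_Re)
    qed
  qed auto
  thus ?thesis by (simp add: mult.commute)
qed

lemma exp_sub2_bound: "cmod (exp z - 1 - z) \<le> cmod z * (cmod z * exp (max 0 (Re z)))"
proof -
  have "norm ((exp z - z) - (exp 0 - 0)) \<le> (cmod z * exp (max 0 (Re z))) * norm (z - 0)"
  proof (rule field_differentiable_bound[where f = "\<lambda>w. exp w - w" and f' = "\<lambda>w. exp w - 1" and S = "closed_segment 0 z"])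
    show "convex (closed_segment 0 z)" by simp
    show "((\<lambda>w. exp w - w) has_field_derivative exp w - 1) (at w within closed_segment 0 z)" for w
      by (rule DERIV_subset) (auto intro!: derivative_eq_intros)
    show "norm (exp w - 1) \<le> cmod z * exp (max 0 (Re z))" if hw: "w \<in> closed_segment 0 z" for w
    proof -
      obtain u where u: "0 \<le> u" "u \<le> 1" "w = u *\<^sub>R z" using hw by (auto simp: in_segment)
      have "Re w = u * Re z" using u by simp
      also have "\<dots> \<le> max 0 (Re z)"
        using u by (cases "0 \<le> Re z") (auto intro: mult_left_le_one_le mult_nonneg_nonpos order_trans[of _ 0] simp: mult_le_0_iff)
      finally have r: "max 0 (Re w) \<le> max 0 (Re z)" by simp
      have "cmod w \<le> cmod z" using u by (simp add: mult_left_le_one_le)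
      have "norm (exp w - 1) \<le> cmod w * exp (max 0 (Re w))" by (rule exp_sub1_bound)
      also have "\<dots> \<le> cmod z * exp (max 0 (Re z))"
        using \<open>cmod w \<le> cmod z\<close> r by (intro mult_mono) auto
      finally show ?thesis .
    qed
  qed auto
  thus ?thesis by (simp add: algebra_simps)
qed

lemma lam0: "lam n 0 = 2" unfolding lam_def by simp

lemma dist_line: "\<exists>\<delta>>0. \<forall>n l. l < mm n \<longrightarrow> \<delta> \<le> cmod (Complex 1 y - lam n l)"
proof -
  obtain N where N: "\<And>n. n \<ge> N \<Longrightarrow> \<bar>y\<bar> + 1 \<le> kk n"
    using kk_big[of "\<bar>y\<bar> + 1"] unfolding eventually_sequentially by blast
  define D where "D = insert 1 ((\<lambda>n. kk n * tt n - 1) ` {..<N})"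
  have fD: "finite D" "D \<noteq> {}" unfolding D_def by auto
  have Dpos: "\<forall>d\<in>D. 0 < d" unfolding D_def using kk_gt by auto
  define \<delta> where "\<delta> = Min D"
  have dpos: "0 < \<delta>" unfolding \<delta>_def using fD Dpos by simp
  have d1: "\<delta> \<le> 1" unfolding \<delta>_def D_def by (rule Min_le) auto
  have dN: "\<delta> \<le> kk n * tt n - 1" if "n < N" for n unfolding \<delta>_def D_def by (rule Min_le) (use that in auto)
  have main: "\<delta> \<le> cmod (Complex 1 y - lam n l)" if l: "l < mm n" for n l
  proof -
    have m4: "4 \<le> mm n" unfolding mm_def by simp
    consider "l = 0" | "l = 1 \<or> l = mm n - 1" | "2 \<le> l \<and> l + 2 \<le> mm n" using l m4 by linarith
    thus ?thesis
    proof cases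
      case 1
      have "1 \<le> \<bar>Re (Complex 1 y - lam n l)\<bar>" using 1 by (simp add: lam0)
      also have "\<dots> \<le> cmod (Complex 1 y - lam n l)" by (rule abs_Re_le_cmod)
      finally show ?thesis using d1 by linarith
    next
      case 3
      have "1 \<le> \<bar>Re (Complex 1 y - lam n l)\<bar>" using Re_lam_mid[of l n] 3 by simp
      also have "\<dots> \<le> cmod (Complex 1 y - lam n l)" by (rule abs_Re_le_cmod)
      finally show ?thesis using d1 by linarith
    next
      case 2
      hence lv: "lam n l = Complex (2 - kk n * tt n) (kk n) \<or> lam n l = Complex (2 - kk n * tt n) (- kk n)"
        using lam1 lam_last by auto
      show ?thesis
      proof (cases "n < N")
        case True
        have "kk n * tt n - 1 \<le> \<bar>Re (Complex 1 y - lam n l)\<bar>" using lv by auto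
        also have "\<dots> \<le> cmod (Complex 1 y - lam n l)" by (rule abs_Re_le_cmod)
        finally show ?thesis using dN[OF True] by linarith
      next
        case False
        hence kb: "\<bar>y\<bar> + 1 \<le> kk n" using N by simp
        have "1 \<le> \<bar>Im (Complex 1 y - lam n l)\<bar>" using lv kb by auto
        also have "\<dots> \<le> cmod (Complex 1 y - lam n l)" by (rule abs_Im_le_cmod)
        finally show ?thesis using d1 by linarith
      qed
    qed
  qed
  show ?thesis using dpos main by blast
qed


lemma ev01: "eventually (\<lambda>t. 0 < t \<and> t < 1) (at_right (0::real))"
  by (rule eventually_at_rightI[where b = 1]) auto

lemma Ltwo_scale: "Ltwo_norm M (\<lambda>x. a * f x) = cmod a * Ltwo_norm M f"
proof -
  have "(\<integral>x. (cmod (a * f x))\<^sup>2 \<partial>M) = (cmod a)\<^sup>2 * (\<integral>x. (cmod (f x))\<^sup>2 \<partial>M)"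
    by (simp add: norm_mult power_mult_distrib)
  thus ?thesis unfolding Ltwo_norm_def by (simp add: real_sqrt_mult)
qed

lemma blk_cong: "(\<And>n j. j < mm n \<Longrightarrow> f (enc n j) = g (enc n j)) \<Longrightarrow> blk f = blk g"
  unfolding blk_def bsum_def by (auto intro!: sum.cong)

lemma L2_cong: "(\<And>n j. j < mm n \<Longrightarrow> f (enc n j) = g (enc n j)) \<Longrightarrow> g \<in> L2 (count_space Om) \<Longrightarrow> f \<in> L2 (count_space Om)"
  unfolding L2_Om using blk_cong by metis

lemma norm_cong: "(\<And>n j. j < mm n \<Longrightarrow> f (enc n j) = g (enc n j)) \<Longrightarrow> g \<in> L2 (count_space Om) \<Longrightarrow>
   Ltwo_norm (count_space Om) f = Ltwo_norm (count_space Om) g"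
  using L2_cong[of f g] norm_Om[of f] norm_Om[of g] blk_cong[of f g] by simp

lemma Mult_comb: "a * Mult \<phi> f x + b * Mult \<psi> f x = Mult (\<lambda>n l. a * \<phi> n l + b * \<psi> n l) f x"
proof -
  have "Mult (\<lambda>n l. a * \<phi> n l + b * \<psi> n l) f x = Syn (\<lambda>n l. a * (\<phi> n l * fhat f n l) + b * (\<psi> n l * fhat f n l)) x"
    unfolding Mult_def by (simp add: algebra_simps)
  also have "\<dots> = a * Mult \<phi> f x + b * Mult \<psi> f x" unfolding Mult_def by (rule Syn_lin)
  finally show ?thesis by simp
qed

lemma Mult_cong_phi: "(\<And>n l. l < mm n \<Longrightarrow> \<phi> n l = \<psi> n l) \<Longrightarrow> Mult \<phi> f = Mult \<psi> f"
  unfolding Mult_def by (rule ext, rule Syn_cong) simp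

lemma coef_le_norm:
  assumes "u \<in> L2 (count_space Om)" "l < mm n"
  shows "cmod (fhat u n l) \<le> Ltwo_norm (count_space Om) u"
proof -
  have s: "summable (cf (fhat u))" using assms(1) L2_fhat by blast
  have "(cmod (fhat u n l))\<^sup>2 \<le> cf (fhat u) n"
    unfolding cf_def using assms(2) by (intro member_le_sum) auto
  also have "\<dots> \<le> (\<Sum>n. cf (fhat u) n)"
    using sum_le_suminf[OF s, of "{n}"] cf_nonneg by simp
  finally have "cmod (fhat u n l) \<le> sqrt (\<Sum>n. cf (fhat u) n)" by (rule real_le_rsqrt)
  thus ?thesis using norm_fhat[OF assms(1)] by simp
qed

definition SS :: "real \<Rightarrow> (real \<Rightarrow> complex) \<Rightarrow> real \<Rightarrow> complex" where
  "SS t = Mult (\<lambda>n l. exp (complex_of_real t * lam n l))"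

lemma norm_exp_tlam:
  assumes "0 \<le> t" shows "cmod (exp (complex_of_real t * lam n l)) \<le> exp (2 * t)"
proof -
  have "t * Re (lam n l) \<le> t * 2" by (rule mult_left_mono[OF Re_lam_le assms])
  hence "t * Re (lam n l) \<le> 2 * t" by simp
  thus ?thesis by (simp add: norm_exp_eq_Re)
qed

lemma SS_bounded: "0 \<le> t \<Longrightarrow> bounded_op (count_space Om) (SS t)"
  unfolding SS_def by (rule bounded_Mult[where B = "exp (2 * t)"]) (rule norm_exp_tlam)

lemma SS_L2: "0 \<le> t \<Longrightarrow> f \<in> L2 (count_space Om) \<Longrightarrow> SS t f \<in> L2 (count_space Om)"
  unfolding SS_def by (rule L2_Mult[where B = "exp (2 * t)"]) (rule norm_exp_tlam, auto)

lemma SS_0: "j < mm n \<Longrightarrow> SS 0 f (enc n j) = f (enc n j)"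
  unfolding SS_def by (simp add: Mult_enc)

lemma SS_add: "SS (s + t) f = SS s (SS t f)"
  unfolding SS_def Mult_Mult by (simp add: distrib_right exp_add)

lemma SS_cont:
  assumes f: "f \<in> L2 (count_space Om)"
  shows "((\<lambda>t. Ltwo_norm (count_space Om) (\<lambda>x. SS t f x - f x)) \<longlongrightarrow> 0) (at_right 0)"
proof -
  define \<phi> where "\<phi> t n l = exp (complex_of_real t * lam n l) - 1" for t n l
  have bnd: "cmod (\<phi> t n l) \<le> exp 2 + 1" if "0 \<le> t" "t \<le> 1" for t n l
  proof -
    have "cmod (\<phi> t n l) \<le> cmod (exp (complex_of_real t * lam n l)) + cmod 1"
      unfolding \<phi>_def by (rule norm_triangle_ineq4)
    also have "\<dots> \<le> exp (2 * t) + 1" using norm_exp_tlam[OF that(1)] by simp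
    also have "\<dots> \<le> exp 2 + 1" using that by simp
    finally show ?thesis .
  qed
  have eqn: "Ltwo_norm (count_space Om) (\<lambda>x. SS t f x - f x) = sqrt (\<Sum>n. cf (\<lambda>n l. \<phi> t n l * fhat f n l) n)"
    if "0 < t" "t < 1" for t
  proof -
    have mem: "Mult (\<phi> t) f \<in> L2 (count_space Om)"
      by (rule L2_Mult[OF _ f]) (rule bnd, use that in auto)
    have "Ltwo_norm (count_space Om) (\<lambda>x. SS t f x - f x) = Ltwo_norm (count_space Om) (Mult (\<phi> t) f)"
    proof (rule norm_cong[OF _ mem])
      fix n j assume j: "j < mm n"
      have "SS t f (enc n j) - f (enc n j) = 1 * SS t f (enc n j) + (-1) * Mult (\<lambda>n l. 1) f (enc n j)"
        using Mult_enc[OF j, of f] by simp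
      also have "\<dots> = Mult (\<lambda>n l. 1 * exp (complex_of_real t * lam n l) + (-1) * 1) f (enc n j)"
        unfolding SS_def by (rule Mult_comb)
      also have "\<dots> = Mult (\<phi> t) f (enc n j)" unfolding \<phi>_def by simp
      finally show "SS t f (enc n j) - f (enc n j) = Mult (\<phi> t) f (enc n j)" .
    qed
    also have "\<dots> = sqrt (\<Sum>n. cf (\<lambda>n l. \<phi> t n l * fhat f n l) n)"
      unfolding Mult_def
      by (rule norm_Syn) (use mem in \<open>simp add: Mult_def L2_Syn\<close>)
    finally show ?thesis .
  qed
  have lim: "((\<lambda>t. \<Sum>n. cf (\<lambda>n l. \<phi> t n l * fhat f n l) n) \<longlongrightarrow> 0) (at_right 0)"
  proof (rule suminf_tendsto0)
    show "summable (\<lambda>n. (exp 2 + 1)\<^sup>2 * cf (fhat f) n)"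
      using f L2_fhat summable_mult by blast
    show "\<forall>\<^sub>F t in at_right 0. \<forall>n. 0 \<le> cf (\<lambda>n l. \<phi> t n l * fhat f n l) n \<and>
            cf (\<lambda>n l. \<phi> t n l * fhat f n l) n \<le> (exp 2 + 1)\<^sup>2 * cf (fhat f) n"
      using ev01 by eventually_elim (auto simp: cf_nonneg intro!: cf_Mult_le bnd)
    fix n
    have "((\<lambda>t. \<Sum>l<mm n. (cmod (\<phi> t n l * fhat f n l))\<^sup>2) \<longlongrightarrow> (\<Sum>l<mm n. (cmod ((exp (complex_of_real 0 * lam n l) - 1) * fhat f n l))\<^sup>2)) (at_right 0)"
      unfolding \<phi>_def by (intro tendsto_intros)
    thus "((\<lambda>t. cf (\<lambda>n l. \<phi> t n l * fhat f n l) n) \<longlongrightarrow> 0) (at_right 0)"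
      unfolding cf_def by simp
  qed
  have "((\<lambda>t. sqrt (\<Sum>n. cf (\<lambda>n l. \<phi> t n l * fhat f n l) n)) \<longlongrightarrow> sqrt 0) (at_right 0)"
    by (rule tendsto_real_sqrt[OF lim])
  hence "((\<lambda>t. sqrt (\<Sum>n. cf (\<lambda>n l. \<phi> t n l * fhat f n l) n)) \<longlongrightarrow> 0) (at_right 0)" by simp
  thus ?thesis
    by (rule tendsto_cong[THEN iffD1, rotated]) (use ev01 in \<open>eventually_elim, simp add: eqn\<close>)
qed

lemma SS_C0: "C0_semigroup (count_space Om) SS"
  unfolding C0_semigroup_def
proof (intro conjI allI impI ballI)
  show "bounded_op (count_space Om) (SS t)" if "0 \<le> t" for t using SS_bounded[OF that] .
  show "ae_eq (count_space Om) (SS 0 f) f" for f unfolding ae_Om by (simp add: SS_0)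
  show "ae_eq (count_space Om) (SS (s + t) f) (SS s (SS t f))" for s t f by (simp add: SS_add ae_eq_def)
  show "((\<lambda>t. Ltwo_norm (count_space Om) (\<lambda>x. SS t f x - f x)) \<longlongrightarrow> 0) (at_right 0)"
    if "f \<in> L2 (count_space Om)" for f using SS_cont[OF that] .
qed

lemma quot_eq: "0 < h \<Longrightarrow> (exp (complex_of_real h * z) - 1) / complex_of_real h - z = (exp (complex_of_real h * z) - 1 - complex_of_real h * z) / complex_of_real h"
  by (simp add: field_simps)

lemma maxre: "0 < h \<Longrightarrow> h \<le> 1 \<Longrightarrow> Re z \<le> 2 \<Longrightarrow> exp (max 0 (Re (complex_of_real h * z))) \<le> exp 2"
proof -
  assume a: "0 < h" "h \<le> 1" "Re z \<le> 2"
  have "h * Re z \<le> 1 * 2"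
  proof (cases "0 \<le> Re z")
    case True thus ?thesis using a by (intro mult_mono) auto
  next
    case False
    hence "h * Re z \<le> 0" using a by (simp add: mult_le_0_iff)
    thus ?thesis by simp
  qed
  thus ?thesis by simp
qed

lemma quot_bound1:
  assumes "0 < h" "h \<le> 1" "Re z \<le> 2"
  shows "cmod ((exp (complex_of_real h * z) - 1) / complex_of_real h - z) \<le> (exp 2 + 1) * cmod z"
proof -
  have "cmod ((exp (complex_of_real h * z) - 1) / complex_of_real h - z) \<le> cmod ((exp (complex_of_real h * z) - 1) / complex_of_real h) + cmod z"
    by (rule norm_triangle_ineq4)
  also have "cmod ((exp (complex_of_real h * z) - 1) / complex_of_real h) = cmod (exp (complex_of_real h * z) - 1) / h"
    using assms by (simp add: norm_divide)
  also have "\<dots> \<le> (cmod (complex_of_real h * z) * exp (max 0 (Re (complex_of_real h * z)))) / h"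
    using assms by (intro divide_right_mono exp_sub1_bound) auto
  also have "\<dots> = cmod z * exp (max 0 (Re (complex_of_real h * z)))"
    using assms by (simp add: norm_mult)
  also have "\<dots> \<le> cmod z * exp 2" using maxre[OF assms] by (intro mult_left_mono) auto
  finally show ?thesis by (simp add: algebra_simps)
qed

lemma quot_bound2:
  assumes "0 < h" "h \<le> 1" "Re z \<le> 2"
  shows "cmod ((exp (complex_of_real h * z) - 1) / complex_of_real h - z) \<le> h * ((cmod z)\<^sup>2 * exp 2)"
proof -
  have "cmod ((exp (complex_of_real h * z) - 1) / complex_of_real h - z) = cmod (exp (complex_of_real h * z) - 1 - complex_of_real h * z) / h"
    using assms by (simp add: quot_eq norm_divide)
  also have "\<dots> \<le> (cmod (complex_of_real h * z) * (cmod (complex_of_real h * z) * exp (max 0 (Re (complex_of_real h * z))))) / h"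
    using assms by (intro divide_right_mono exp_sub2_bound) auto
  also have "\<dots> = h * ((cmod z)\<^sup>2 * exp (max 0 (Re (complex_of_real h * z))))"
    using assms by (simp add: norm_mult power2_eq_square)
  also have "\<dots> \<le> h * ((cmod z)\<^sup>2 * exp 2)" using maxre[OF assms] assms by (intro mult_left_mono) auto
  finally show ?thesis .
qed

lemma quot_lim0:
  assumes "Re z \<le> 2"
  shows "((\<lambda>h. (exp (complex_of_real h * z) - 1) / complex_of_real h - z) \<longlongrightarrow> 0) (at_right 0)"
proof (rule tendsto_norm_zero_cancel, rule tendsto_sandwich[where f = "\<lambda>_. 0" and h = "\<lambda>h. h * ((cmod z)\<^sup>2 * exp 2)"])
  show "\<forall>\<^sub>F h in at_right 0. 0 \<le> norm ((exp (complex_of_real h * z) - 1) / complex_of_real h - z)" by simp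
  show "\<forall>\<^sub>F h in at_right 0. norm ((exp (complex_of_real h * z) - 1) / complex_of_real h - z) \<le> h * ((cmod z)\<^sup>2 * exp 2)"
    using ev01 by eventually_elim (use quot_bound2 assms in auto)
  have "((\<lambda>h::real. h * ((cmod z)\<^sup>2 * exp 2)) \<longlongrightarrow> 0 * ((cmod z)\<^sup>2 * exp 2)) (at_right 0)"
    by (intro tendsto_intros)
  thus "((\<lambda>h::real. h * ((cmod z)\<^sup>2 * exp 2)) \<longlongrightarrow> 0) (at_right 0)" by simp
qed simp

lemma quot_lim:
  assumes "Re z \<le> 2"
  shows "((\<lambda>h. (exp (complex_of_real h * z) - 1) / complex_of_real h) \<longlongrightarrow> z) (at_right 0)"
proof -
  have "((\<lambda>h. ((exp (complex_of_real h * z) - 1) / complex_of_real h - z) + z) \<longlongrightarrow> 0 + z) (at_right 0)"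
    by (intro tendsto_add quot_lim0 assms tendsto_const)
  thus ?thesis by simp
qed


lemma psi_id: "hh \<noteq> 0 \<Longrightarrow> c - L \<noteq> 0 \<Longrightarrow>
  (1 / hh * (E * (1 / (c - L))) + (- 1 / hh) * (1 / (c - L))) + ((- c) * (1 / (c - L)) + 1 * 1) = ((E - 1) / hh - L) / (c - L)"
  for hh c L E :: complex
proof -
  assume a: "hh \<noteq> 0" "c - L \<noteq> 0"
  define z where "z = c - L"
  have z0: "z \<noteq> 0" using a z_def by simp
  have cz: "c = z + L" by (simp add: z_def)
  show ?thesis unfolding cz using z0 a(1) by (simp add: field_simps)
qed

lemma eq2_id: "c - L \<noteq> 0 \<Longrightarrow> c * (1 / (c - L)) + (-1) * 1 = L / (c - L)"
  for c L :: complex by (simp add: field_simps)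

lemma coef_id: "c - L \<noteq> 0 \<Longrightarrow> 1 / (c - L) * (c * F - L * F) = F"
  for c L F :: complex by (simp add: field_simps)

lemma fhat_lin3: "fhat (\<lambda>x. a * u x + b * v x + d * w x) n l = a * fhat u n l + b * fhat v n l + d * fhat w n l"
proof -
  have "fhat (\<lambda>x. a * u x + b * v x + d * w x) n l = fhat (\<lambda>x. 1 * (a * u x + b * v x) + d * w x) n l" by simp
  also have "\<dots> = 1 * fhat (\<lambda>x. a * u x + b * v x) n l + d * fhat w n l" by (rule fhat_lin)
  also have "\<dots> = a * fhat u n l + b * fhat v n l + d * fhat w n l" by (simp add: fhat_lin)
  finally show ?thesis .
qed

lemma Mult_add: "Mult \<phi> f x + Mult \<psi> f x = Mult (\<lambda>n l. \<phi> n l + \<psi> n l) f x"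
  using Mult_comb[of 1 \<phi> f x 1 \<psi>] by simp

lemma sq_tri: "(cmod (x + y))\<^sup>2 \<le> 2 * (cmod x)\<^sup>2 + 2 * (cmod y)\<^sup>2"
proof -
  have "(cmod (x + y))\<^sup>2 \<le> (cmod x + cmod y)\<^sup>2"
    by (intro power_mono norm_triangle_ineq) auto
  also have "\<dots> \<le> 2 * (cmod x)\<^sup>2 + 2 * (cmod y)\<^sup>2"
    using sum_squares_ge_zero[of "cmod x - cmod y" 0] by (simp add: power2_eq_square algebra_simps)
  finally show ?thesis .
qed

lemma L2_lin:
  assumes f: "f \<in> L2 (count_space Om)" and g: "g \<in> L2 (count_space Om)"
  shows "(\<lambda>x. a * f x + b * g x) \<in> L2 (count_space Om)"
proof -
  have sf: "summable (cf (fhat f))" and sg: "summable (cf (fhat g))" using f g L2_fhat by blast+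
  have le: "cf (fhat (\<lambda>x. a * f x + b * g x)) n \<le> 2 * (cmod a)\<^sup>2 * cf (fhat f) n + 2 * (cmod b)\<^sup>2 * cf (fhat g) n" for n
  proof -
    have "cf (fhat (\<lambda>x. a * f x + b * g x)) n = (\<Sum>l<mm n. (cmod (a * fhat f n l + b * fhat g n l))\<^sup>2)"
      unfolding cf_def fhat_lin ..
    also have "\<dots> \<le> (\<Sum>l<mm n. 2 * (cmod (a * fhat f n l))\<^sup>2 + 2 * (cmod (b * fhat g n l))\<^sup>2)"
      by (intro sum_mono sq_tri)
    also have "\<dots> = 2 * (cmod a)\<^sup>2 * cf (fhat f) n + 2 * (cmod b)\<^sup>2 * cf (fhat g) n"
      unfolding cf_def by (simp add: sum.distrib sum_distrib_left norm_mult power_mult_distrib mult.assoc)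
    finally show ?thesis .
  qed
  have "summable (cf (fhat (\<lambda>x. a * f x + b * g x)))"
    by (rule summable_comparison_test'[OF summable_add[OF summable_mult[OF sf] summable_mult[OF sg]]])
       (use le cf_nonneg in auto)
  thus ?thesis unfolding L2_fhat .
qed

lemma resolvent:
  "Complex 1 y \<notin> rel_spectrum (count_space Om) (generator (count_space Om) SS)"
proof -
  define c where "c = Complex 1 y"
  obtain \<delta> where dpos: "0 < \<delta>" and dl: "\<And>n l. l < mm n \<Longrightarrow> \<delta> \<le> cmod (c - lam n l)"
    using dist_line[of y] unfolding c_def by blast
  have cne: "c - lam n l \<noteq> 0" if "l < mm n" for n l using dl[OF that] dpos by auto
  define K0 where "K0 = cmod c / \<delta> + 1"
  have b1: "cmod (1 / (c - lam n l)) \<le> 1 / \<delta>" if "l < mm n" for n l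
  proof -
    have p: "0 < cmod (c - lam n l)" using dl[OF that] dpos by linarith
    have "1 / cmod (c - lam n l) \<le> 1 / \<delta>"
      by (rule divide_left_mono) (use dl[OF that] dpos p in \<open>auto simp: zero_less_mult_iff\<close>)
    thus ?thesis by (simp add: norm_divide)
  qed
  have b2: "cmod (lam n l) / cmod (c - lam n l) \<le> K0" if "l < mm n" for n l
  proof -
    have p: "0 < cmod (c - lam n l)" using cne[OF that] by simp
    have "cmod (lam n l) \<le> cmod c + cmod (c - lam n l)"
      using norm_triangle_ineq4[of c "c - lam n l"] by simp
    hence "cmod (lam n l) / cmod (c - lam n l) \<le> cmod c / cmod (c - lam n l) + 1"
      using p by (simp add: field_simps)
    also have "cmod c / cmod (c - lam n l) \<le> cmod c / \<delta>"
      by (rule divide_left_mono) (use dl[OF that] dpos p in \<open>auto simp: zero_less_mult_iff\<close>)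
    finally show ?thesis unfolding K0_def by simp
  qed
  define R where "R = Mult (\<lambda>n l. 1 / (c - lam n l))"
  have Rb: "bounded_op (count_space Om) R" unfolding R_def by (rule bounded_Mult[OF b1])
  have RL2: "R f \<in> L2 (count_space Om)" if "f \<in> L2 (count_space Om)" for f
    unfolding R_def by (rule L2_Mult[OF b1 that])
  have gen1: "generator (count_space Om) SS (R f) (\<lambda>x. c * R f x - f x)" if f: "f \<in> L2 (count_space Om)" for f
  proof -
    define \<psi> where "\<psi> h n l = ((exp (complex_of_real h * lam n l) - 1) / complex_of_real h - lam n l) / (c - lam n l)" for h n l
    have eq2: "c * R f (enc n j) - f (enc n j) = Mult (\<lambda>n l. lam n l / (c - lam n l)) f (enc n j)" if j: "j < mm n" for n j
    proof -
      have "c * R f (enc n j) - f (enc n j) = c * R f (enc n j) + (-1) * Mult (\<lambda>n l. 1) f (enc n j)"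
        using Mult_enc[OF j, of f] by simp
      also have "\<dots> = Mult (\<lambda>n l. c * (1 / (c - lam n l)) + (-1) * 1) f (enc n j)"
        unfolding R_def by (rule Mult_comb)
      also have "\<dots> = Mult (\<lambda>n l. lam n l / (c - lam n l)) f (enc n j)"
        by (rule fun_cong[OF Mult_cong_phi]) (rule eq2_id[OF cne])
      finally show ?thesis .
    qed
    have bl: "cmod (lam n l / (c - lam n l)) \<le> K0" if "l < mm n" for n l
      using b2[OF that] by (simp add: norm_divide)
    have gL2: "(\<lambda>x. c * R f x - f x) \<in> L2 (count_space Om)"
      by (rule L2_cong[OF eq2 L2_Mult[OF bl f]])
    have eq3: "(SS h (R f) (enc n j) - R f (enc n j)) / complex_of_real h - (c * R f (enc n j) - f (enc n j)) = Mult (\<psi> h) f (enc n j)"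
      if j: "j < mm n" and h: "0 < h" for n j h
    proof -
      let ?A = "Mult (\<lambda>n l. exp (complex_of_real h * lam n l) * (1 / (c - lam n l))) f (enc n j)"
      let ?B = "Mult (\<lambda>n l. 1 / (c - lam n l)) f (enc n j)"
      let ?F = "Mult (\<lambda>n l. 1) f (enc n j)"
      have A: "SS h (R f) (enc n j) = ?A" unfolding SS_def R_def Mult_Mult ..
      have "(SS h (R f) (enc n j) - R f (enc n j)) / complex_of_real h - (c * R f (enc n j) - f (enc n j))
          = (1 / complex_of_real h * ?A + (- 1 / complex_of_real h) * ?B) + ((- c) * ?B + 1 * ?F)"
      proof -
        have e1: "R f (enc n j) = ?B" unfolding R_def ..
        have e2: "f (enc n j) = ?F" using Mult_enc[OF j, of f] by simp
        have hz: "complex_of_real h \<noteq> 0" using h by simp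
        have gen: "\<And>A B F. (A - B) / complex_of_real h - (c * B - F) = (1 / complex_of_real h * A + (- 1 / complex_of_real h) * B) + ((- c) * B + 1 * F)"
          using hz by (simp add: field_simps)
        have "(SS h (R f) (enc n j) - R f (enc n j)) / complex_of_real h - (c * R f (enc n j) - f (enc n j))
          = (1 / complex_of_real h * ?A + (- 1 / complex_of_real h) * ?B) + ((- c) * ?B + 1 * f (enc n j))"
          unfolding A e1 by (rule gen)
        also have "\<dots> = (1 / complex_of_real h * ?A + (- 1 / complex_of_real h) * ?B) + ((- c) * ?B + 1 * ?F)"
          by (simp only: e2)
        finally show ?thesis .
      qed
      also have "\<dots> = Mult (\<lambda>n l. 1 / complex_of_real h * (exp (complex_of_real h * lam n l) * (1 / (c - lam n l))) + (- 1 / complex_of_real h) * (1 / (c - lam n l))) f (enc n j)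
                     + Mult (\<lambda>n l. (- c) * (1 / (c - lam n l)) + 1 * 1) f (enc n j)"
        by (simp only: Mult_comb)
      also have "\<dots> = Mult (\<lambda>n l. (1 / complex_of_real h * (exp (complex_of_real h * lam n l) * (1 / (c - lam n l))) + (- 1 / complex_of_real h) * (1 / (c - lam n l)))
                     + ((- c) * (1 / (c - lam n l)) + 1 * 1)) f (enc n j)"
        by (rule Mult_add)
      also have "\<dots> = Mult (\<psi> h) f (enc n j)"
        unfolding \<psi>_def by (rule fun_cong[OF Mult_cong_phi]) (rule psi_id[OF _ cne], use h in auto)
      finally show ?thesis .
    qed
    have bpsi: "cmod (\<psi> h n l) \<le> (exp 2 + 1) * K0" if "l < mm n" "0 < h" "h \<le> 1" for h n l
    proof -
      have "cmod (\<psi> h n l) = cmod ((exp (complex_of_real h * lam n l) - 1) / complex_of_real h - lam n l) / cmod (c - lam n l)"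
        unfolding \<psi>_def by (simp add: norm_divide)
      also have "\<dots> \<le> ((exp 2 + 1) * cmod (lam n l)) / cmod (c - lam n l)"
        by (intro divide_right_mono quot_bound1 that Re_lam_le) auto
      also have "\<dots> = (exp 2 + 1) * (cmod (lam n l) / cmod (c - lam n l))" by simp
      also have "\<dots> \<le> (exp 2 + 1) * K0" by (intro mult_left_mono b2 that) (simp add: add_nonneg_nonneg)
      finally show ?thesis .
    qed
    have psi0: "((\<lambda>h. \<psi> h n l) \<longlongrightarrow> 0) (at_right 0)" for n l
    proof -
      show ?thesis unfolding \<psi>_def by (intro tendsto_divide_zero quot_lim0 Re_lam_le)
    qed
    have eqn: "Ltwo_norm (count_space Om) (\<lambda>x. (SS h (R f) x - R f x) / complex_of_real h - (c * R f x - f x))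
              = sqrt (\<Sum>n. cf (\<lambda>n l. \<psi> h n l * fhat f n l) n)" if h: "0 < h" "h < 1" for h
    proof -
      have mem: "Mult (\<psi> h) f \<in> L2 (count_space Om)"
        by (rule L2_Mult[OF _ f]) (rule bpsi, use h in auto)
      have "Ltwo_norm (count_space Om) (\<lambda>x. (SS h (R f) x - R f x) / complex_of_real h - (c * R f x - f x))
            = Ltwo_norm (count_space Om) (Mult (\<psi> h) f)"
        by (rule norm_cong[OF _ mem]) (rule eq3, use h in auto)
      also have "\<dots> = sqrt (\<Sum>n. cf (\<lambda>n l. \<psi> h n l * fhat f n l) n)"
        unfolding Mult_def by (rule norm_Syn) (use mem in \<open>simp add: Mult_def L2_Syn\<close>)
      finally show ?thesis .
    qed
    have lim: "((\<lambda>h. \<Sum>n. cf (\<lambda>n l. \<psi> h n l * fhat f n l) n) \<longlongrightarrow> 0) (at_right 0)"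
    proof (rule suminf_tendsto0)
      show "summable (\<lambda>n. ((exp 2 + 1) * K0)\<^sup>2 * cf (fhat f) n)"
        using f L2_fhat summable_mult by blast
      show "\<forall>\<^sub>F h in at_right 0. \<forall>n. 0 \<le> cf (\<lambda>n l. \<psi> h n l * fhat f n l) n \<and>
              cf (\<lambda>n l. \<psi> h n l * fhat f n l) n \<le> ((exp 2 + 1) * K0)\<^sup>2 * cf (fhat f) n"
        using ev01 by eventually_elim (auto simp: cf_nonneg intro!: cf_Mult_le bpsi)
      fix n
      have "((\<lambda>h. \<Sum>l<mm n. (cmod (\<psi> h n l * fhat f n l))\<^sup>2) \<longlongrightarrow> (\<Sum>l<mm n. (cmod (0 * fhat f n l))\<^sup>2)) (at_right 0)"
        by (intro tendsto_intros psi0)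
      thus "((\<lambda>h. cf (\<lambda>n l. \<psi> h n l * fhat f n l) n) \<longlongrightarrow> 0) (at_right 0)"
        unfolding cf_def by simp
    qed
    have "((\<lambda>h. sqrt (\<Sum>n. cf (\<lambda>n l. \<psi> h n l * fhat f n l) n)) \<longlongrightarrow> sqrt 0) (at_right 0)"
      by (rule tendsto_real_sqrt[OF lim])
    hence "((\<lambda>h. sqrt (\<Sum>n. cf (\<lambda>n l. \<psi> h n l * fhat f n l) n)) \<longlongrightarrow> 0) (at_right 0)" by simp
    hence "((\<lambda>h. Ltwo_norm (count_space Om) (\<lambda>x. (SS h (R f) x - R f x) / complex_of_real h - (c * R f x - f x))) \<longlongrightarrow> 0) (at_right 0)"
      by (rule tendsto_cong[THEN iffD1, rotated]) (use ev01 in \<open>eventually_elim, simp add: eqn\<close>)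
    thus ?thesis unfolding generator_def using RL2[OF f] gL2 by blast
  qed
  have gen2: "ae_eq (count_space Om) (R (\<lambda>x. c * f x - g x)) f" if G: "generator (count_space Om) SS f g" for f g
  proof -
    have f: "f \<in> L2 (count_space Om)" and g: "g \<in> L2 (count_space Om)"
      and conv: "((\<lambda>h. Ltwo_norm (count_space Om) (\<lambda>x. (SS h f x - f x) / complex_of_real h - g x)) \<longlongrightarrow> 0) (at_right 0)"
      using G unfolding generator_def by auto
    have coef: "fhat g n l = lam n l * fhat f n l" if l: "l < mm n" for n l
    proof -
      define q where "q h x = (SS h f x - f x) / complex_of_real h - g x" for h x
      have qf: "q h = (\<lambda>x. (1 / complex_of_real h) * SS h f x + (- 1 / complex_of_real h) * f x + (-1) * g x)" for h
        unfolding q_def by (rule ext) (simp add: diff_divide_distrib)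
      have fq: "fhat (q h) n l = ((exp (complex_of_real h * lam n l) - 1) / complex_of_real h) * fhat f n l - fhat g n l" for h
      proof -
        have "fhat (q h) n l = (1 / complex_of_real h) * fhat (SS h f) n l + (- 1 / complex_of_real h) * fhat f n l + (-1) * fhat g n l"
          unfolding qf by (rule fhat_lin3)
        also have "fhat (SS h f) n l = exp (complex_of_real h * lam n l) * fhat f n l"
          unfolding SS_def using l by (rule fhat_Mult)
        finally show ?thesis by (simp add: divide_inverse algebra_simps)
      qed
      have qL2: "q h \<in> L2 (count_space Om)" if "0 < h" for h
      proof -
        have "Mult (\<lambda>n l. (exp (complex_of_real h * lam n l) - 1) / complex_of_real h) f \<in> L2 (count_space Om)"
        proof (rule L2_Mult[OF _ f])
          fix n l assume "l < mm n"
          have "cmod ((exp (complex_of_real h * lam n l) - 1) / complex_of_real h) \<le> (exp (2 * h) + 1) / h"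
          proof -
            have "cmod (exp (complex_of_real h * lam n l) - 1) \<le> cmod (exp (complex_of_real h * lam n l)) + cmod 1"
              by (rule norm_triangle_ineq4)
            also have "\<dots> \<le> exp (2 * h) + 1" using norm_exp_tlam[of h n l] that by simp
            finally show ?thesis using that by (simp add: norm_divide divide_right_mono)
          qed
          thus "cmod ((exp (complex_of_real h * lam n l) - 1) / complex_of_real h) \<le> (exp (2 * h) + 1) / h" .
        qed
        moreover have qe: "q h (enc n j) = 1 * Mult (\<lambda>n l. (exp (complex_of_real h * lam n l) - 1) / complex_of_real h) f (enc n j) + (-1) * g (enc n j)"
          if j: "j < mm n" for n j
        proof -
          have "q h (enc n j) = 1 / complex_of_real h * SS h f (enc n j) + (- 1 / complex_of_real h) * Mult (\<lambda>n l. 1) f (enc n j) + (-1) * g (enc n j)"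
            unfolding qf using Mult_enc[OF j, of f] by simp
          also have "1 / complex_of_real h * SS h f (enc n j) + (- 1 / complex_of_real h) * Mult (\<lambda>n l. 1) f (enc n j)
              = Mult (\<lambda>n l. 1 / complex_of_real h * exp (complex_of_real h * lam n l) + (- 1 / complex_of_real h) * 1) f (enc n j)"
            unfolding SS_def by (rule Mult_comb)
          also have "\<dots> = Mult (\<lambda>n l. (exp (complex_of_real h * lam n l) - 1) / complex_of_real h) f (enc n j)"
            by (rule fun_cong[OF Mult_cong_phi]) (simp add: diff_divide_distrib)
          finally show ?thesis by simp
        qed
        moreover have m3: "(\<lambda>x. 1 * Mult (\<lambda>n l. (exp (complex_of_real h * lam n l) - 1) / complex_of_real h) f x + (-1) * g x) \<in> L2 (count_space Om)"
          using calculation(1) g by (rule L2_lin)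
        show ?thesis
          by (rule L2_cong[of "q h" "\<lambda>x. 1 * Mult (\<lambda>n l. (exp (complex_of_real h * lam n l) - 1) / complex_of_real h) f x + (-1) * g x", OF qe m3])
      qed
      have t1: "((\<lambda>h. fhat (q h) n l) \<longlongrightarrow> 0) (at_right 0)"
      proof (rule tendsto_norm_zero_cancel, rule tendsto_sandwich[where f = "\<lambda>_. 0" and h = "\<lambda>h. Ltwo_norm (count_space Om) (q h)"])
        show "\<forall>\<^sub>F h in at_right 0. 0 \<le> norm (fhat (q h) n l)" by simp
        show "\<forall>\<^sub>F h in at_right 0. norm (fhat (q h) n l) \<le> Ltwo_norm (count_space Om) (q h)"
          using ev01 by eventually_elim (auto intro!: coef_le_norm qL2 l)
        show "((\<lambda>h. Ltwo_norm (count_space Om) (q h)) \<longlongrightarrow> 0) (at_right 0)" using conv unfolding q_def .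
      qed simp
      have t2: "((\<lambda>h. fhat (q h) n l) \<longlongrightarrow> lam n l * fhat f n l - fhat g n l) (at_right 0)"
        unfolding fq by (intro tendsto_intros quot_lim Re_lam_le)
      have "lam n l * fhat f n l - fhat g n l = 0"
        using tendsto_unique[OF _ t2 t1] by simp
      thus ?thesis by simp
    qed
    show ?thesis unfolding ae_Om
    proof (intro allI impI)
      fix n j assume j: "j < mm n"
      have fh: "fhat (\<lambda>x. c * f x - g x) n' l = c * fhat f n' l - fhat g n' l" for n' l
      proof -
        have e: "(\<lambda>x. c * f x - g x) = (\<lambda>x. c * f x + (-1) * g x)" by simp
        show ?thesis unfolding e fhat_lin by simp
      qed
      have "R (\<lambda>x. c * f x - g x) (enc n j) = Syn (fhat f) (enc n j)"
        unfolding R_def Mult_def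
      proof (rule Syn_cong)
        fix n' l assume l: "l < mm n'"
        have "1 / (c - lam n' l) * fhat (\<lambda>x. c * f x - g x) n' l = 1 / (c - lam n' l) * (c * fhat f n' l - lam n' l * fhat f n' l)"
          by (simp only: fh coef[OF l])
        also have "\<dots> = fhat f n' l" by (rule coef_id[OF cne[OF l]])
        finally show "1 / (c - lam n' l) * fhat (\<lambda>x. c * f x - g x) n' l = fhat f n' l" .
      qed
      also have "\<dots> = f (enc n j)" by (rule Syn_fhat[OF j])
      finally show "R (\<lambda>x. c * f x - g x) (enc n j) = f (enc n j)" .
    qed
  qed
  show ?thesis
    unfolding rel_spectrum_def c_def[symmetric] using Rb gen1 gen2 by blast
qed

definition dl :: "nat \<Rightarrow> nat \<Rightarrow> nat \<Rightarrow> complex" where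
  "dl N n l = (if n = N \<and> l = 1 then 1 else 0)"
definition ev :: "nat \<Rightarrow> real \<Rightarrow> complex" where "ev N = Syn (dl N)"
definition mu :: "nat \<Rightarrow> complex" where "mu N = exp (complex_of_real (2 * pi) * lam N 1)"

lemma one_lt_mm: "1 < mm n" unfolding mm_def by simp

lemma cf_dl: "cf (dl N) n = (if n = N then 1 else 0)"
proof (cases "n = N")
  case True
  have "cf (dl N) n = (\<Sum>l<mm n. if l = 1 then 1 else 0)"
    unfolding cf_def dl_def using True by (intro sum.cong) auto
  also have "\<dots> = 1" using one_lt_mm[of n] by simp
  finally show ?thesis using True by simp
next
  case False thus ?thesis unfolding cf_def dl_def by simp
qed

lemma ev_sums: "cf (dl N) sums 1"
proof -
  have "(\<lambda>n. if n = N then (\<lambda>_. 1::real) n else 0) sums (\<lambda>_. 1::real) N" by (rule sums_single)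
  thus ?thesis unfolding cf_dl[abs_def] by simp
qed

lemma ev_L2: "ev N \<in> L2 (count_space Om)"
  unfolding ev_def L2_Syn using ev_sums sums_summable by blast

lemma ev_norm: "Ltwo_norm (count_space Om) (ev N) = 1"
  unfolding ev_def using norm_Syn[of "dl N"] ev_sums sums_summable sums_unique by fastforce

lemma SS_ev: "SS (2 * pi) (ev N) x = mu N * ev N x"
proof -
  have "SS (2 * pi) (ev N) x = Syn (\<lambda>n l. mu N * dl N n l + 0 * dl N n l) x"
    unfolding SS_def Mult_def ev_def
    by (rule Syn_cong) (auto simp: fhat_Syn dl_def mu_def)
  also have "\<dots> = mu N * ev N x + 0 * ev N x" unfolding ev_def by (rule Syn_lin)
  finally show ?thesis by simp
qed

lemma mu_eq: "mu N = complex_of_real (exp (2 * pi * (2 - kk N * tt N)))"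
proof -
  have e: "complex_of_real (2 * pi) * lam N 1 = complex_of_real (2 * pi * (2 - kk N * tt N)) + complex_of_real (2 * kk N * pi) * \<i>"
    unfolding lam1 by (simp add: complex_eq_iff)
  have "exp (complex_of_real (2 * kk N * pi) * \<i>) = 1" by (rule exp_integer_2pi[OF kk_int])
  thus ?thesis unfolding mu_def e exp_add by (simp flip: exp_of_real)
qed

lemma mu_lim: "(\<lambda>N. cmod (complex_of_real (exp (2 * pi)) - mu N)) \<longlonglongrightarrow> 0"
proof -
  have "(\<lambda>N. cmod (complex_of_real (exp (2 * pi)) - complex_of_real (exp (2 * pi * (2 - kk N * tt N)))))
        \<longlonglongrightarrow> cmod (complex_of_real (exp (2 * pi)) - complex_of_real (exp (2 * pi * (2 - 1))))"
    by (intro tendsto_intros kktt_lim)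
  thus ?thesis unfolding mu_eq by simp
qed

lemma spec: "complex_of_real (exp (2 * pi)) \<in> op_spectrum (count_space Om) (SS (2 * pi))"
proof -
  let ?c = "complex_of_real (exp (2 * pi))"
  {
    fix R assume Rb: "bounded_op (count_space Om) R"
      and inv: "\<forall>f\<in>L2 (count_space Om). ae_eq (count_space Om) (R (\<lambda>x. ?c * f x - SS (2 * pi) f x)) f \<and>
                  ae_eq (count_space Om) (\<lambda>x. ?c * R f x - SS (2 * pi) (R f) x) f"
    obtain C where C: "\<And>f. f \<in> L2 (count_space Om) \<Longrightarrow> Ltwo_norm (count_space Om) (R f) \<le> C * Ltwo_norm (count_space Om) f"
      using Rb unfolding bounded_op_def by blast
    have lin: "\<And>f a. f \<in> L2 (count_space Om) \<Longrightarrow> ae_eq (count_space Om) (R (\<lambda>x. a * f x + 0 * f x)) (\<lambda>x. a * R f x + 0 * R f x)"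
      using Rb unfolding bounded_op_def by blast
    have RL2: "\<And>f. f \<in> L2 (count_space Om) \<Longrightarrow> R f \<in> L2 (count_space Om)"
      using Rb unfolding bounded_op_def by blast
    have key: "1 \<le> cmod (?c - mu N) * C" for N
    proof -
      let ?a = "?c - mu N"
      have fe: "(\<lambda>x. ?c * ev N x - SS (2 * pi) (ev N) x) = (\<lambda>x. ?a * ev N x + 0 * ev N x)"
        by (rule ext, unfold SS_ev) (simp add: algebra_simps)
      have a0: "ae_eq (count_space Om) (R (\<lambda>x. ?c * ev N x - SS (2 * pi) (ev N) x)) (ev N)"
        using inv ev_L2[of N] by blast
      have a1: "ae_eq (count_space Om) (R (\<lambda>x. ?a * ev N x + 0 * ev N x)) (ev N)"
        using a0 unfolding fe .
      have a2: "ae_eq (count_space Om) (R (\<lambda>x. ?a * ev N x + 0 * ev N x)) (\<lambda>x. ?a * R (ev N) x + 0 * R (ev N) x)"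
        by (rule lin[OF ev_L2])
      have agree: "\<And>n j. j < mm n \<Longrightarrow> (\<lambda>x. ?a * R (ev N) x) (enc n j) = ev N (enc n j)"
        using a1 a2 unfolding ae_Om by simp
      have "1 = Ltwo_norm (count_space Om) (ev N)" by (simp add: ev_norm)
      also have "\<dots> = Ltwo_norm (count_space Om) (\<lambda>x. ?a * R (ev N) x)"
        by (rule norm_cong[OF agree ev_L2, symmetric])
      also have "\<dots> = cmod ?a * Ltwo_norm (count_space Om) (R (ev N))" by (rule Ltwo_scale)
      also have "\<dots> \<le> cmod ?a * (C * Ltwo_norm (count_space Om) (ev N))"
        by (intro mult_left_mono C ev_L2) auto
      also have "\<dots> = cmod ?a * C" by (simp add: ev_norm)
      finally show ?thesis .
    qed
    have "(\<lambda>N. cmod (?c - mu N) * C) \<longlonglongrightarrow> 0 * C"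
      by (intro tendsto_intros mu_lim)
    hence "eventually (\<lambda>N. cmod (?c - mu N) * C < 1) sequentially"
      by (intro order_tendstoD) auto
    then obtain N where "cmod (?c - mu N) * C < 1" by (auto simp: eventually_sequentially)
    with key[of N] have False by simp
  }
  thus ?thesis unfolding op_spectrum_def by blast
qed

lemma gen_k: "(\<Sum>l\<in>LL. (E l * ((\<Sum>i\<in>II. F i * A l i) / ss)) * B l) / ss = (\<Sum>i\<in>II. F i * (\<Sum>l\<in>LL. E l * (A l i * B l))) / (ss * (ss::complex))"
proof -
  have "(\<Sum>l\<in>LL. (E l * ((\<Sum>i\<in>II. F i * A l i) / ss)) * B l) = (\<Sum>l\<in>LL. \<Sum>i\<in>II. F i * (E l * (A l i * B l)) / ss)"
    by (simp add: sum_distrib_left sum_distrib_right sum_divide_distrib mult_ac)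
  also have "\<dots> = (\<Sum>i\<in>II. \<Sum>l\<in>LL. F i * (E l * (A l i * B l)) / ss)" by (rule sum.swap)
  also have "\<dots> = (\<Sum>i\<in>II. F i * (\<Sum>l\<in>LL. E l * (A l i * B l))) / ss"
    by (simp add: sum_distrib_left sum_divide_distrib)
  finally show ?thesis by simp
qed

lemma exp_sums: "(\<lambda>k. complex_of_real (r ^ k / fact k) * w ^ k) sums exp (complex_of_real r * w)"
proof -
  have "(\<lambda>k. (complex_of_real r * w) ^ k /\<^sub>R fact k) sums exp (complex_of_real r * w)" by (rule exp_converges)
  moreover have "(\<lambda>k. (complex_of_real r * w) ^ k /\<^sub>R fact k) = (\<lambda>k. complex_of_real (r ^ k / fact k) * w ^ k)"
    by (rule ext) (simp add: scaleR_conv_of_real power_mult_distrib divide_inverse mult_ac)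
  ultimately show ?thesis by simp
qed

definition Kr :: "real \<Rightarrow> nat \<Rightarrow> nat \<Rightarrow> nat \<Rightarrow> real" where
  "Kr t n j i = exp (t * (2 - bb n)) * (\<Sum>k. (t * bb n) ^ k / fact k * (if (k + j) mod mm n = i then 1 else 0))"

lemma Kr_summable: "0 \<le> t \<Longrightarrow> summable (\<lambda>k. (t * bb n) ^ k / fact k * (if (k + j) mod mm n = i then 1 else (0::real)))"
  by (rule summable_comparison_test'[OF summable_exp[of "t * bb n"]])
     (use bb_pos[of n] in \<open>auto simp: divide_inverse mult_ac\<close>)

lemma Kr_nonneg: "0 \<le> t \<Longrightarrow> 0 \<le> Kr t n j i"
  unfolding Kr_def using bb_pos[of n]
  by (intro mult_nonneg_nonneg suminf_nonneg Kr_summable) auto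

lemma kern_sum:
  assumes t: "0 \<le> t" and i: "i < mm n"
  shows "(\<Sum>l<mm n. exp (complex_of_real t * lam n l) * (cnj (om n) ^ (l * i) * om n ^ (l * j)))
         = of_nat (mm n) * complex_of_real (Kr t n j i)"
proof -
  let ?m = "mm n" and ?w = "om n" and ?z = "om n ^ j * cnj (om n) ^ i"
  let ?b = "\<lambda>k. (t * bb n) ^ k / fact k" and ?P = "\<lambda>k. (k + j) mod mm n = i"
  have E: "exp (complex_of_real t * lam n l) = exp (complex_of_real (t * (2 - bb n))) * exp (complex_of_real (t * bb n) * ?w ^ l)" for l
    unfolding lam_def by (simp add: distrib_left exp_add mult.assoc)
  have s1: "(\<lambda>k. \<Sum>l<?m. complex_of_real (?b k) * (?w ^ l) ^ k * ?z ^ l) sums (\<Sum>l<?m. exp (complex_of_real (t * bb n) * ?w ^ l) * ?z ^ l)"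
    by (intro sums_sum sums_mult2 exp_sums)
  have tm: "(\<Sum>l<?m. complex_of_real (?b k) * (?w ^ l) ^ k * ?z ^ l) = of_nat ?m * complex_of_real (?b k * (if ?P k then 1 else 0))" for k
  proof -
    have "(\<Sum>l<?m. complex_of_real (?b k) * (?w ^ l) ^ k * ?z ^ l) = complex_of_real (?b k) * (\<Sum>l<?m. (?w ^ (k + j) * cnj ?w ^ i) ^ l)"
      by (simp add: sum_distrib_left power_mult_distrib power_add mult_ac flip: power_mult)
    also have "\<dots> = complex_of_real (?b k) * (if ?P k then of_nat ?m else 0)" using orth[OF i] by simp
    finally show ?thesis by simp
  qed
  have s2: "(\<lambda>k. of_nat ?m * complex_of_real (?b k * (if ?P k then 1 else 0))) sums (of_nat ?m * complex_of_real (\<Sum>k. ?b k * (if ?P k then 1 else 0)))"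
    by (intro sums_mult sums_of_real summable_sums Kr_summable t)
  have "(\<Sum>l<?m. exp (complex_of_real (t * bb n) * ?w ^ l) * ?z ^ l) = of_nat ?m * complex_of_real (\<Sum>k. ?b k * (if ?P k then 1 else 0))"
    using sums_unique2[OF s1[unfolded tm] s2] .
  moreover have "(\<Sum>l<?m. exp (complex_of_real t * lam n l) * ?z ^ l) = exp (complex_of_real (t * (2 - bb n))) * (\<Sum>l<?m. exp (complex_of_real (t * bb n) * ?w ^ l) * ?z ^ l)"
    by (simp only: E sum_distrib_left mult.assoc)
  ultimately have "(\<Sum>l<?m. exp (complex_of_real t * lam n l) * ?z ^ l) = exp (complex_of_real (t * (2 - bb n))) * (of_nat ?m * complex_of_real (\<Sum>k. ?b k * (if ?P k then 1 else 0)))"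
    by simp
  also have "\<dots> = of_nat ?m * complex_of_real (Kr t n j i)"
    unfolding Kr_def exp_of_real by (simp only: of_real_mult mult_ac)
  finally show ?thesis by (simp add: pow_swap)
qed


lemma SS_kernel:
  assumes t: "0 \<le> t" and j: "j < mm n"
  shows "SS t f (enc n j) = (\<Sum>i<mm n. complex_of_real (Kr t n j i) * f (enc n i))"
proof -
  let ?E = "\<lambda>l. exp (complex_of_real t * lam n l)"
  have "SS t f (enc n j) = (\<Sum>l<mm n. (?E l * ((\<Sum>i<mm n. f (enc n i) * cnj (om n) ^ (l * i)) / sqrt (mm n))) * om n ^ (l * j)) / sqrt (mm n)"
    unfolding SS_def Mult_def Syn_enc ifft_def fhat_def ..
  also have "\<dots> = (\<Sum>i<mm n. f (enc n i) * (\<Sum>l<mm n. ?E l * (cnj (om n) ^ (l * i) * om n ^ (l * j)))) / (complex_of_real (sqrt (mm n)) * complex_of_real (sqrt (mm n)))"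
    by (rule gen_k)
  also have "\<dots> = (\<Sum>i<mm n. f (enc n i) * (of_nat (mm n) * complex_of_real (Kr t n j i))) / of_nat (mm n)"
    unfolding sqrt_sq_c by (intro arg_cong2[where f = "(/)"] sum.cong refl) (simp add: kern_sum[OF t])
  also have "\<dots> = (\<Sum>i<mm n. complex_of_real (Kr t n j i) * f (enc n i))"
    using mm_pos[of n] by (simp add: sum_divide_distrib mult_ac)
  finally show ?thesis .
qed

lemma SS_pos:
  assumes t: "0 \<le> t"
  shows "positive_op (count_space Om) (SS t)"
  unfolding positive_op_def AE_count_space
proof (intro ballI impI)
  fix f x assume hf: "\<forall>x\<in>Om. Im (f x) = 0 \<and> 0 \<le> Re (f x)" and x: "x \<in> Om"
  from x obtain n j where j: "j < mm n" and xe: "x = enc n j" by (rule Om_cases)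
  have fr: "f (enc n i) = complex_of_real (Re (f (enc n i)))" if "i < mm n" for i
    using hf that unfolding Om_def Om0_def by (intro complex_eqI) auto
  have fnn: "0 \<le> Re (f (enc n i))" if "i < mm n" for i
    using hf that unfolding Om_def Om0_def by auto
  have "SS t f x = (\<Sum>i<mm n. complex_of_real (Kr t n j i) * complex_of_real (Re (f (enc n i))))"
    unfolding xe SS_kernel[OF t j] by (intro sum.cong refl) (subst fr, auto)
  also have "\<dots> = complex_of_real (\<Sum>i<mm n. Kr t n j i * Re (f (enc n i)))" by simp
  finally have e: "SS t f x = complex_of_real (\<Sum>i<mm n. Kr t n j i * Re (f (enc n i)))" .
  have "0 \<le> (\<Sum>i<mm n. Kr t n j i * Re (f (enc n i)))"
    by (intro sum_nonneg mult_nonneg_nonneg Kr_nonneg t fnn) auto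
  thus "Im (SS t f x) = 0 \<and> 0 \<le> Re (SS t f x)" unfolding e by simp
qed

theorem theorem5:
  shows "\<exists>(M :: real measure) (S :: real \<Rightarrow> (real \<Rightarrow> complex) \<Rightarrow> (real \<Rightarrow> complex)).
           sigma_finite_measure M \<and>
           C0_semigroup M S \<and>
           (\<forall>t\<ge>0. positive_op M (S t)) \<and>
           (\<forall>y::real. Complex 1 y \<notin> rel_spectrum M (generator M S)) \<and>
           complex_of_real (exp (2 * pi)) \<in> op_spectrum M (S (2 * pi))"
  using sigma_Om SS_C0 SS_pos resolvent spec by blast

end
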